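(* Assume QEPmin is in the easy case, let $v_*$ be the unique minimizer of CRQopt and $(\lambda_*,u_* )$ the minimizer of LGopt, let $\theta_{\min}$ and $\theta_{\max}$ be the smallest and largest eigenvalues of $H$, and $\kappa=\frac{\theta_{\max}-\lambda_*}{\theta_{\min}-\lambda_*}$. Then for every $k\le k_{\max}$ and any nonzero $v\in n_0+\mathcal K_k(PAP,b_0)$: $0\le h(v^{(k)})-h(v_* )\le 4\|H-\lambda_*I\|_2\,\|v-v_*\|_2^2$, $\|v^{(k)}-v_*\|\le 2\sqrt\kappa\,\|v-v_*\|_2$, $|\mu^{(k)}-\lambda_*|\le\frac{1}{\gamma^2}\left[4\|H-\lambda_*I\|_2\,\|v-v_*\|_2^2+2\sqrt\kappa\,\|b_0\|_2\,\|v-v_*\|_2\right]$.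
   Context: Let $A\in\mathbb{R}^{n\times n}$ be symmetric, $C\in\mathbb{R}^{n\times m}$ ($m<n$) full column rank, $b\in\mathbb{R}^m$, $n_0=C(C^{\top}C)^{-1}b$ with $\|n_0\|<1$, $\gamma=\sqrt{1-\|n_0\|^2}$, $P=I-C(C^{\top}C)^{-1}C^{\top}$ (orthogonal projector onto $\mathcal N(C^{\top})$), $b_0=PAn_0\neq0$, $h(v)=v^{\top}Av$. CRQopt: minimize $h(v)$ s.t. $v^{\top}v=1$, $C^{\top}v=b$. LGopt: minimize $\lambda$ over $(\lambda,u)$ with $(PAP-\lambda I)u=-b_0$, $\|u\|=\gamma$, $u\in\mathcal N(C^{\top})$. QEPmin: minimize $\lambda$ over $(\lambda,z)$, $\lambda\in\mathbb{R}$, $0\ne z\in\mathcal N(C^{\top})$, $(PAP-\lambda I)^2z=\gamma^{-2}b_0b_0^{\top}z$; it is in the hard case if it has a minimizer with $b_0^{\top}z=0$, otherwise in the easy case. $S_1\in\mathbb{R}^{n\times(n-m)}$ has orthonormal columns spanning $\mathcal N(C^{\top})$ and $H=S_1^{\top}AS_1$. $\mathcal K_k(PAP,b_0)=\operatorname{span}\{b_0,\dots,(PAP)^{k-1}b_0\}$. Lanczos process with $M=PAP$: $q_0=0$, $\beta_1=\|b_0\|$, $q_1=b_0/\|b_0\|$, for $j\ge1$: $\alpha_j=q_j^{\top}Mq_j$, $\widehat q_{j+1}=Mq_j-\alpha_jq_j-\beta_jq_{j-1}$, $\beta_{j+1}=\|\widehat q_{j+1}\|$, $q_{j+1}=\widehat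 q_{j+1}/\beta_{j+1}$ when $\beta_{j+1}>0$; $k_{\max}$ is the smallest $k$ with $\beta_{k+1}=0$; $Q_k=[q_1,\dots,q_k]$, $T_k=Q_k^{\top}PAPQ_k$. rLGopt: minimize $\lambda$ over $(\lambda,x)\in\mathbb{R}\times\mathbb{R}^k$ with $(T_k-\lambda I)x=-\|b_0\|e_1$, $\|x\|=\gamma$; $(\mu^{(k)},x^{(k)})$ is its minimizer and $v^{(k)}=n_0+Q_kx^{(k)}$. *)

theory Defs
  imports "HOL-Analysis.Analysis"
begin

text \<open>Quadratic form h(v) = v^T A v.\<close>
definition hq :: "real^'n^'n \<Rightarrow> real^'n \<Rightarrow> real" where
  "hq A v = v \<bullet> (A *v v)"

definition n0vec :: "real^'m^'n \<Rightarrow> real^'m \<Rightarrow> real^'n" where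
  "n0vec C b = (C ** matrix_inv (transpose C ** C)) *v b"

definition projP :: "real^'m^'n \<Rightarrow> real^'n^'n" where
  "projP C = mat 1 - C ** matrix_inv (transpose C ** C) ** transpose C"

definition gam :: "real^'m^'n \<Rightarrow> real^'m \<Rightarrow> real" where
  "gam C b = sqrt (1 - (norm (n0vec C b))\<^sup>2)"

definition b0vec :: "real^'n^'n \<Rightarrow> real^'m^'n \<Rightarrow> real^'m \<Rightarrow> real^'n" where
  "b0vec A C b = projP C *v (A *v n0vec C b)"

text \<open>CRQopt: minimize h(v) s.t. v^T v = 1, C^T v = b.\<close>
definition crq_feasible :: "real^'m^'n \<Rightarrow> real^'m \<Rightarrow> real^'n \<Rightarrow> bool" where
  "crq_feasible C b v \<longleftrightarrow> v \<bullet> v = 1 \<and> transpose C *v v = b"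

definition crq_minimizer :: "real^'n^'n \<Rightarrow> real^'m^'n \<Rightarrow> real^'m \<Rightarrow> real^'n \<Rightarrow> bool" where
  "crq_minimizer A C b v \<longleftrightarrow> crq_feasible C b v \<and>
     (\<forall>w. crq_feasible C b w \<longrightarrow> hq A v \<le> hq A w)"

text \<open>LGopt: minimize lambda s.t. (PAP - lambda I) u = -b0, norm u = gamma, u in N(C^T).\<close>
definition lg_feasible :: "real^'n^'n \<Rightarrow> real^'m^'n \<Rightarrow> real^'m \<Rightarrow> real \<Rightarrow> real^'n \<Rightarrow> bool" where
  "lg_feasible A C b lam u \<longleftrightarrow>
     (projP C ** A ** projP C - lam *\<^sub>R mat 1) *v u = - b0vec A C b \<and>
     norm u = gam C b \<and> transpose C *v u = 0"

definition lg_minimizer :: "real^'n^'n \<Rightarrow> real^'m^'n \<Rightarrow> real^'m \<Rightarrow> real \<Rightarrow> real^'n \<Rightarrow> bool" where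
  "lg_minimizer A C b lam u \<longleftrightarrow> lg_feasible A C b lam u \<and>
     (\<forall>lam' u'. lg_feasible A C b lam' u' \<longrightarrow> lam \<le> lam')"

text \<open>QEPmin.\<close>
definition qep_feasible :: "real^'n^'n \<Rightarrow> real^'m^'n \<Rightarrow> real^'m \<Rightarrow> real \<Rightarrow> real^'n \<Rightarrow> bool" where
  "qep_feasible A C b lam z \<longleftrightarrow> z \<noteq> 0 \<and> transpose C *v z = 0 \<and>
     (let N = projP C ** A ** projP C - lam *\<^sub>R mat 1
      in (N ** N) *v z = (1 / (gam C b)\<^sup>2) *\<^sub>R ((b0vec A C b \<bullet> z) *\<^sub>R b0vec A C b))"

definition qep_minimizer :: "real^'n^'n \<Rightarrow> real^'m^'n \<Rightarrow> real^'m \<Rightarrow> real \<Rightarrow> real^'n \<Rightarrow> bool" where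
  "qep_minimizer A C b lam z \<longleftrightarrow> qep_feasible A C b lam z \<and>
     (\<forall>lam' z'. qep_feasible A C b lam' z' \<longrightarrow> lam \<le> lam')"

definition qep_hard_case :: "real^'n^'n \<Rightarrow> real^'m^'n \<Rightarrow> real^'m \<Rightarrow> bool" where
  "qep_hard_case A C b \<longleftrightarrow> (\<exists>lam z. qep_minimizer A C b lam z \<and> b0vec A C b \<bullet> z = 0)"

definition qep_easy_case :: "real^'n^'n \<Rightarrow> real^'m^'n \<Rightarrow> real^'m \<Rightarrow> bool" where
  "qep_easy_case A C b \<longleftrightarrow> \<not> qep_hard_case A C b"

text \<open>Eigenvalues of a square matrix.\<close>
definition eigvals :: "real^'k^'k \<Rightarrow> real set" where
  "eigvals H = {t. \<exists>x. x \<noteq> 0 \<and> H *v x = t *\<^sub>R x}"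

text \<open>Lanczos process.  lanczos M b j = (q_j, q_(j+1), beta_(j+1)).\<close>
primrec lanczos :: "real^'n^'n \<Rightarrow> real^'n \<Rightarrow> nat \<Rightarrow> (real^'n) \<times> (real^'n) \<times> real" where
  "lanczos M b 0 = (0, b /\<^sub>R norm b, norm b)"
| "lanczos M b (Suc j) =
     (case lanczos M b j of (qp, q, be) \<Rightarrow>
       (let w = M *v q - (q \<bullet> (M *v q)) *\<^sub>R q - be *\<^sub>R qp
        in (q, w /\<^sub>R norm w, norm w)))"

text \<open>q_j for j >= 1.\<close>
definition lq :: "real^'n^'n \<Rightarrow> real^'n \<Rightarrow> nat \<Rightarrow> real^'n" where
  "lq M b j = fst (snd (lanczos M b (j - 1)))"

text \<open>beta_j for j >= 1.\<close>
definition lbeta :: "real^'n^'n \<Rightarrow> real^'n \<Rightarrow> nat \<Rightarrow> real" where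
  "lbeta M b j = snd (snd (lanczos M b (j - 1)))"

text \<open>k_max: smallest k (>= 1) with beta_(k+1) = 0.\<close>
definition kmax :: "real^'n^'n \<Rightarrow> real^'n \<Rightarrow> nat" where
  "kmax M b = (LEAST k. 1 \<le> k \<and> lbeta M b (k + 1) = 0)"

text \<open>Entries of T_k = Q_k^T M Q_k (indices 1..k).\<close>
definition Tk :: "real^'n^'n \<Rightarrow> real^'n \<Rightarrow> nat \<Rightarrow> nat \<Rightarrow> real" where
  "Tk M b i j = lq M b i \<bullet> (M *v lq M b j)"

text \<open>rLGopt, with x in R^k represented as nat => real on indices 1..k.\<close>
definition rlg_feasible :: "real^'n^'n \<Rightarrow> real^'n \<Rightarrow> real \<Rightarrow> nat \<Rightarrow> real \<Rightarrow> (nat \<Rightarrow> real) \<Rightarrow> bool" where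
  "rlg_feasible M b g k lam x \<longleftrightarrow>
     (\<forall>i\<in>{1..k}. (\<Sum>j=1..k. Tk M b i j * x j) - lam * x i = (if i = 1 then - norm b else 0)) \<and>
     sqrt (\<Sum>i=1..k. (x i)\<^sup>2) = g"

definition rlg_minimizer :: "real^'n^'n \<Rightarrow> real^'n \<Rightarrow> real \<Rightarrow> nat \<Rightarrow> real \<Rightarrow> (nat \<Rightarrow> real) \<Rightarrow> bool" where
  "rlg_minimizer M b g k lam x \<longleftrightarrow> rlg_feasible M b g k lam x \<and>
     (\<forall>lam' x'. rlg_feasible M b g k lam' x' \<longrightarrow> lam \<le> lam')"

text \<open>Krylov subspace K_k(M, b).\<close>
definition krylov :: "real^'n^'n \<Rightarrow> real^'n \<Rightarrow> nat \<Rightarrow> (real^'n) set" where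
  "krylov M b k = span ((\<lambda>i. (((*v) M) ^^ i) b) ` {..<k})"

end

theory Submission
  imports Defs
begin

(* ---- part A ---- *)
lemma quad_lin0:
  fixes b c :: real
  assumes "\<forall>t. 0 \<le> b*t + c*t^2"
  shows "b = 0"
proof (rule ccontr)
  assume nz: "b \<noteq> 0"
  define K where "K = \<bar>c\<bar> + 1"
  have K: "K > 0" "c \<le> K" unfolding K_def by auto
  define t where "t = - b / (2*K)"
  have "0 \<le> b*t + c*t^2" using assms by blast
  also have "c*t^2 \<le> K * t^2" using K by (intro mult_right_mono) auto
  hence "b*t + c*t^2 \<le> b*t + K*t^2" by linarith
  also have "b*t + K*t^2 = -(b^2/(4*K))" using K unfolding t_def by (simp add: field_simps power2_eq_square)
  also have "\<dots> < 0" using K nz by (simp add: divide_neg_pos)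
  finally show False by simp
qed

lemma quad_const:
  fixes a b c :: real
  assumes "\<forall>t. t \<noteq> 0 \<longrightarrow> 0 \<le> a + b*t + c*t^2"
  shows "0 \<le> a"
proof -
  have lim: "((\<lambda>t. a + b*t + c*t^2) \<longlongrightarrow> a + b*0 + c*0^2) (at (0::real))"
    by (intro tendsto_intros)
  have ev: "eventually (\<lambda>t. 0 \<le> a + b*t + c*t^2) (at (0::real))"
    using assms by (auto simp: eventually_at_filter)
  have "0 \<le> a + b*0 + c*0^2"
    by (rule tendsto_lowerbound[OF lim ev]) simp
  thus ?thesis by simp
qed

lemma cubic_lead0:
  fixes a b c d :: real
  assumes "\<forall>y. 0 \<le> a + b*y + c*y^2 + d*y^3"
  shows "d = 0"
proof -
  define q where "q t = a*t^3 + b*t^2 + c*t + d" for t :: real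
  have qeq: "q t = t^3 * (a + b*(1/t) + c*(1/t)^2 + d*(1/t)^3)" if "t \<noteq> 0" for t
    using that unfolding q_def by (simp add: field_simps power3_eq_cube power2_eq_square)
  have cont: "continuous_on UNIV q" unfolding q_def by (intro continuous_intros)
  have q0: "q 0 = d" unfolding q_def by simp
  have limr: "(q \<longlongrightarrow> d) (at_right 0)"
    using cont q0 by (metis UNIV_I continuous_on_def tendsto_within_subset top_greatest
       filterlim_at_split)
  have liml: "(q \<longlongrightarrow> d) (at_left 0)"
    using cont q0 by (metis UNIV_I continuous_on_def tendsto_within_subset top_greatest
       filterlim_at_split)
  have evr: "eventually (\<lambda>t. 0 \<le> q t) (at_right 0)"
  proof -
    have "eventually (\<lambda>t. t > (0::real)) (at_right 0)" by (simp add: eventually_at_right_less)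
    thus ?thesis
    proof (rule eventually_mono)
      fix t :: real assume "t > 0"
      thus "0 \<le> q t" using qeq[of t] assms[rule_format, of "1/t"] by simp
    qed
  qed
  have evl: "eventually (\<lambda>t. q t \<le> 0) (at_left 0)"
  proof -
    have "eventually (\<lambda>t. t < (0::real)) (at_left 0)" by (simp add: eventually_at_filter)
    thus ?thesis
    proof (rule eventually_mono)
      fix t :: real assume t: "t < 0"
      have "t^3 < 0" using t by (simp add: power_less_zero_eq)
      thus "q t \<le> 0" using qeq[of t] assms[rule_format, of "1/t"] t by (simp add: mult_nonpos_nonneg)
    qed
  qed
  have "0 \<le> d" by (rule tendsto_lowerbound[OF limr evr]) simp
  moreover have "d \<le> 0" by (rule tendsto_upperbound[OF liml evl]) simp
  ultimately show ?thesis by simp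
qed

(* ---- part B ---- *)
definition fq :: "real^'n^'n \<Rightarrow> real^'n \<Rightarrow> real^'n \<Rightarrow> real" where
  "fq M g w = w \<bullet> (M *v w) + 2 * (g \<bullet> w)"

definition kktp :: "real^'n^'n \<Rightarrow> real^'n \<Rightarrow> (real^'n) set \<Rightarrow> real \<Rightarrow> real \<Rightarrow> real^'n \<Rightarrow> bool" where
  "kktp M g V gm lam u \<longleftrightarrow> u \<in> V \<and> norm u = gm \<and> (\<forall>w\<in>V. w \<bullet> (M *v u - lam *\<^sub>R u + g) = 0)"

definition psdp :: "real^'n^'n \<Rightarrow> (real^'n) set \<Rightarrow> real \<Rightarrow> bool" where
  "psdp M V lam \<longleftrightarrow> (\<forall>w\<in>V. 0 \<le> w \<bullet> (M *v w) - lam * (w \<bullet> w))"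

lemma mv_neg: "(M::real^'n^'m) *v (- x) = - (M *v x)"
  using matrix_vector_mult_diff_distrib[of M 0 x] by simp

lemma sym_dot:
  fixes M :: "real^'n^'n"
  assumes "transpose M = M"
  shows "x \<bullet> (M *v y) = (M *v x) \<bullet> y"
proof -
  have "x \<bullet> (M *v y) = (x v* M) \<bullet> y" by (simp add: dot_lmul_matrix)
  also have "x v* M = transpose M *v x" by simp
  finally show ?thesis using assms by simp
qed

lemma fq_diff:
  fixes M :: "real^'n^'n"
  assumes "transpose M = M"
  shows "fq M g (u - t *\<^sub>R w) - fq M g u = t^2 * (w \<bullet> (M *v w)) - 2 * t * (w \<bullet> (M *v u + g))"
proof -
  have s: "u \<bullet> (M *v w) = w \<bullet> (M *v u)" using sym_dot[OF assms] by (simp add: inner_commute)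
  show ?thesis unfolding fq_def
    by (simp add: matrix_vector_mult_diff_distrib matrix_vector_right_distrib inner_diff_left inner_diff_right
       inner_add_right s algebra_simps power2_eq_square inner_commute[of w g])
qed

lemma refl_norm:
  fixes u w :: "real^'n"
  assumes "w \<noteq> 0"
  shows "norm (u - (2 * (u \<bullet> w) / (w \<bullet> w)) *\<^sub>R w) = norm u"
proof -
  have ww: "w \<bullet> w > 0" using assms by simp
  have "(norm (u - (2 * (u \<bullet> w) / (w \<bullet> w)) *\<^sub>R w))^2 = (norm u)^2"
    unfolding power2_norm_eq_inner using ww
    by (simp add: inner_diff_left inner_diff_right field_simps power2_eq_square inner_commute)
  thus ?thesis by (simp add: power2_eq_iff_nonneg)
qed

lemma kkt_identity:
  fixes M :: "real^'n^'n"
  assumes sym: "transpose M = M" and k: "kktp M g V gm lam u" and w: "w \<in> V" "norm w = gm"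
  shows "fq M g w - fq M g u = (w - u) \<bullet> (M *v (w - u)) - lam * ((w - u) \<bullet> (w - u))"
proof -
  have u: "u \<in> V" "norm u = gm" and kk: "\<forall>w\<in>V. w \<bullet> (M *v u - lam *\<^sub>R u + g) = 0"
    using k unfolding kktp_def by auto
  have e1: "w \<bullet> (M *v u) = lam * (w \<bullet> u) - g \<bullet> w"
    using kk w by (auto simp: inner_diff_right inner_add_right inner_commute)
  have e2: "u \<bullet> (M *v u) = lam * (u \<bullet> u) - g \<bullet> u"
    using kk u by (auto simp: inner_diff_right inner_add_right inner_commute)
  have s: "u \<bullet> (M *v w) = w \<bullet> (M *v u)" using sym_dot[OF sym] by (simp add: inner_commute)
  have nn: "w \<bullet> w = u \<bullet> u" using u w by (simp add: dot_square_norm)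
  show ?thesis unfolding fq_def
    by (simp add: matrix_vector_mult_diff_distrib inner_diff_left inner_diff_right e1 e2 s nn
        algebra_simps inner_commute[of u w])
qed

lemma kkt_psd_opt:
  fixes M :: "real^'n^'n"
  assumes sym: "transpose M = M" and k: "kktp M g V gm lam u" and p: "psdp M V lam"
    and sub: "subspace V" and w: "w \<in> V" "norm w = gm"
  shows "fq M g u \<le> fq M g w"
proof -
  have "w - u \<in> V" using k w sub unfolding kktp_def by (auto intro: subspace_diff)
  hence "0 \<le> (w - u) \<bullet> (M *v (w - u)) - lam * ((w - u) \<bullet> (w - u))" using p unfolding psdp_def by blast
  thus ?thesis using kkt_identity[OF sym k w] by linarith
qed

lemma kkt_compare:
  fixes M :: "real^'n^'n"
  assumes sym: "transpose M = M" and k1: "kktp M g V gm l1 u1" and k2: "kktp M g V gm l2 u2"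
    and p: "psdp M V l1" and sub: "subspace V" and gm: "gm > 0"
  shows "l1 \<le> l2"
proof (cases "u1 = u2")
  case True
  have "u1 \<bullet> (M *v u1 - l1 *\<^sub>R u1 + g) = 0" "u1 \<bullet> (M *v u1 - l2 *\<^sub>R u1 + g) = 0"
    using k1 k2 True unfolding kktp_def by auto
  hence "(l2 - l1) * (u1 \<bullet> u1) = 0" by (simp add: inner_diff_right inner_add_right algebra_simps)
    (metis add_diff_cancel_left' diff_diff_eq2 diff_self)
  moreover have "u1 \<bullet> u1 > 0" using k1 gm unfolding kktp_def by auto
  ultimately show ?thesis by simp
next
  case False
  define d where "d = u2 - u1"
  have u: "u1 \<in> V" "norm u1 = gm" "u2 \<in> V" "norm u2 = gm" using k1 k2 unfolding kktp_def by auto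
  have i1: "fq M g u2 - fq M g u1 = d \<bullet> (M *v d) - l1 * (d \<bullet> d)"
    using kkt_identity[OF sym k1 u(3,4)] unfolding d_def .
  have i2: "fq M g u1 - fq M g u2 = (-d) \<bullet> (M *v (-d)) - l2 * ((-d) \<bullet> (-d))"
    using kkt_identity[OF sym k2 u(1,2)] unfolding d_def by simp
  have "d \<in> V" using u sub unfolding d_def by (auto intro: subspace_diff)
  hence q: "0 \<le> d \<bullet> (M *v d) - l1 * (d \<bullet> d)" using p unfolding psdp_def by blast
  have dd: "d \<bullet> d > 0" using False unfolding d_def by simp
  have "(l1 - l2) * (d \<bullet> d) = - 2 * (d \<bullet> (M *v d) - l1 * (d \<bullet> d))"
    using i1 i2 by (simp add: mv_neg algebra_simps) 
  hence "(l1 - l2) * (d \<bullet> d) \<le> 0" using q by (metis mult_nonneg_nonneg mult_minus_left neg_le_0_iff_le zero_le_numeral)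
  thus ?thesis using dd by (simp add: mult_le_0_iff)
qed

(* ---- part C ---- *)
lemma trs_exists:
  fixes M :: "real^'n^'n"
  assumes sym: "transpose M = M" and sub: "subspace V" and v: "v \<in> V" "v \<noteq> 0" and gm: "gm > 0"
  shows "\<exists>lam u. kktp M g V gm lam u \<and> psdp M V lam"
proof -
  define S where "S = V \<inter> sphere 0 gm"
  have cS: "compact S" unfolding S_def
    by (intro closed_Int_compact closed_subspace sub compact_sphere)
  have "(gm / norm v) *\<^sub>R v \<in> S" unfolding S_def using v gm sub
    by (auto simp: subspace_scale)
  hence neS: "S \<noteq> {}" by blast
  have cf: "continuous_on S (fq M g)" unfolding fq_def by (intro continuous_intros)
  obtain u where uS: "u \<in> S" and umin: "\<forall>y\<in>S. fq M g u \<le> fq M g y"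
    using continuous_attains_inf[OF cS neS cf] by blast
  have uV: "u \<in> V" and nu: "norm u = gm" using uS unfolding S_def by auto
  have key: "fq M g u \<le> fq M g y" if "y \<in> V" "norm y = gm" for y
    using umin that unfolding S_def by auto
  have uu: "u \<bullet> u = gm^2" using nu by (simp add: power2_norm_eq_inner[symmetric])
  define r where "r = M *v u + g"
  define lam where "lam = (u \<bullet> r) / gm^2"
  define s where "s = r - lam *\<^sub>R u"
  have us: "u \<bullet> s = 0" unfolding s_def lam_def using uu gm by (simp add: inner_diff_right)
  have symd: "x \<bullet> (M *v y) = y \<bullet> (M *v x)" for x y using sym_dot[OF sym, of x y] by (simp add: inner_commute)
  have refl_step: "0 \<le> t^2 * (w \<bullet> (M *v w)) - 2 * t * (w \<bullet> r)"
    if "w \<in> V" "w \<noteq> 0" "t = 2 * (u \<bullet> w) / (w \<bullet> w)" for w t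
  proof -
    have "u - t *\<^sub>R w \<in> V" using that uV sub by (auto intro: subspace_diff subspace_scale)
    moreover have "norm (u - t *\<^sub>R w) = gm" using refl_norm[OF that(2), of u] that(3) nu by simp
    ultimately have "fq M g u \<le> fq M g (u - t *\<^sub>R w)" using key by blast
    thus ?thesis using fq_diff[OF sym, of g u t w] unfolding r_def by linarith
  qed
  have claimA: "e \<bullet> s = 0" if eV: "e \<in> V" and eu: "e \<bullet> u = 0" for e
  proof -
    define a where "a = 2*gm^2*(u \<bullet> (M *v u)) - 2*gm^2*gm^2*lam"
    define b where "b = 4*gm^2*(e \<bullet> (M *v u)) - 2*gm^2*(e \<bullet> s)"
    define c where "c = 2*gm^2*(e \<bullet> (M *v e)) - 2*(e \<bullet> e)*lam*gm^2"
    define d where "d = - 2*(e \<bullet> e)*(e \<bullet> s)"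
    have "0 \<le> a + b*y + c*y^2 + d*y^3" for y
    proof -
      define w where "w = u + y *\<^sub>R e"
      define D where "D = gm^2 + y^2 * (e \<bullet> e)"
      have Dpos: "D > 0" unfolding D_def using gm by (simp add: add_pos_nonneg)
      have uw: "u \<bullet> w = gm^2" unfolding w_def using uu eu by (simp add: inner_add_right inner_commute)
      have ww: "w \<bullet> w = D" unfolding w_def D_def using uu eu
        by (simp add: inner_add_right inner_add_left inner_commute power2_eq_square)
      have wV: "w \<in> V" unfolding w_def using uV eV sub by (auto intro: subspace_add subspace_scale)
      have wnz: "w \<noteq> 0" using ww Dpos by auto
      define t where "t = 2 * gm^2 / D"
      have tpos: "t > 0" unfolding t_def using Dpos gm by simp
      have "0 \<le> t^2 * (w \<bullet> (M *v w)) - 2 * t * (w \<bullet> r)"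
        using refl_step[OF wV wnz] uw ww unfolding t_def by simp
      hence "0 \<le> t * (t * (w \<bullet> (M *v w)) - 2 * (w \<bullet> r))" by (simp add: algebra_simps power2_eq_square)
      hence "0 \<le> t * (w \<bullet> (M *v w)) - 2 * (w \<bullet> r)" using tpos by (simp add: zero_le_mult_iff)
      hence "0 \<le> D * (t * (w \<bullet> (M *v w)) - 2 * (w \<bullet> r))" using Dpos by simp
      hence h: "0 \<le> 2*gm^2 * (w \<bullet> (M *v w)) - 2 * D * (w \<bullet> r)"
        unfolding t_def using Dpos by (simp add: algebra_simps)
      have wr: "w \<bullet> r = y * (e \<bullet> s) + lam * gm^2"
      proof -
        have "u \<bullet> r = lam * gm^2" unfolding lam_def using gm by simp
        moreover have "e \<bullet> r = e \<bullet> s" unfolding s_def using eu by (simp add: inner_diff_right)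
        ultimately show ?thesis unfolding w_def by (simp add: inner_add_left)
      qed
      have wMw: "w \<bullet> (M *v w) = u \<bullet> (M *v u) + 2*y*(e \<bullet> (M *v u)) + y^2 * (e \<bullet> (M *v e))"
        unfolding w_def using symd[of u e]
        by (simp add: matrix_vector_right_distrib matrix_vector_mult_scaleR inner_add_left inner_add_right
            algebra_simps power2_eq_square)
      have "2*gm^2 * (w \<bullet> (M *v w)) - 2 * D * (w \<bullet> r) = a + b*y + c*y^2 + d*y^3"
        unfolding wr wMw a_def b_def c_def d_def D_def by (simp add: algebra_simps power2_eq_square power3_eq_cube)
      thus ?thesis using h by simp
    qed
    hence "d = 0" using cubic_lead0 by blast
    hence "(e \<bullet> e) * (e \<bullet> s) = 0" unfolding d_def by simp
    thus ?thesis by auto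
  qed
  have claimB: "w \<bullet> s = 0" if wV: "w \<in> V" for w
  proof -
    define e where "e = w - ((w \<bullet> u) / gm^2) *\<^sub>R u"
    have eV: "e \<in> V" unfolding e_def using wV uV sub by (auto intro: subspace_diff subspace_scale)
    have "e \<bullet> u = 0" unfolding e_def using uu gm by (simp add: inner_diff_left)
    hence "e \<bullet> s = 0" using claimA eV by blast
    moreover have "w = e + ((w \<bullet> u) / gm^2) *\<^sub>R u" unfolding e_def by simp
    ultimately show ?thesis using us by (metis inner_add_left inner_scaleR_left mult_zero_right add_0)
  qed
  have kkt: "kktp M g V gm lam u"
    unfolding kktp_def using uV nu claimB unfolding s_def r_def by (simp add: algebra_simps)
  define Q where "Q z = z \<bullet> (M *v z) - lam * (z \<bullet> z)" for z
  have psd1: "0 \<le> Q z" if zV: "z \<in> V" and zu: "z \<bullet> u \<noteq> 0" for z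
  proof -
    have znz: "z \<noteq> 0" using zu by auto
    define t where "t = 2 * (u \<bullet> z) / (z \<bullet> z)"
    have zz: "z \<bullet> z > 0" using znz by simp
    have tnz: "t \<noteq> 0" unfolding t_def using zu zz by (simp add: inner_commute)
    have h: "0 \<le> t^2 * (z \<bullet> (M *v z)) - 2 * t * (z \<bullet> r)" using refl_step[OF zV znz t_def] .
    have zr: "z \<bullet> r = lam * (z \<bullet> u)" using claimB[OF zV] unfolding s_def by (simp add: inner_diff_right)
    have tzz: "t * (z \<bullet> z) = 2 * (z \<bullet> u)" unfolding t_def using zz by (simp add: inner_commute)
    have "2 * t * (z \<bullet> r) = t^2 * (lam * (z \<bullet> z))"
      unfolding zr using tzz by (simp add: power2_eq_square algebra_simps)
    hence "0 \<le> t^2 * Q z" using h unfolding Q_def by (simp add: algebra_simps)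
    moreover have "t^2 > 0" using tnz by simp
    ultimately show ?thesis by (simp add: zero_le_mult_iff)
  qed
  have psd: "psdp M V lam" unfolding psdp_def
  proof
    fix e assume eV: "e \<in> V"
    show "0 \<le> e \<bullet> (M *v e) - lam * (e \<bullet> e)"
    proof (cases "e \<bullet> u = 0")
      case False thus ?thesis using psd1[OF eV] unfolding Q_def by simp
    next
      case True
      have "\<forall>y. y \<noteq> 0 \<longrightarrow> 0 \<le> Q e + (2 * (e \<bullet> (M *v u)) - 2 * lam * (e \<bullet> u)) * y + Q u * y^2"
      proof (intro allI impI)
        fix y :: real assume y: "y \<noteq> 0"
        have zV: "e + y *\<^sub>R u \<in> V" using eV uV sub by (auto intro: subspace_add subspace_scale)
        have "(e + y *\<^sub>R u) \<bullet> u = y * gm^2" using True uu by (simp add: inner_add_left)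
        hence "(e + y *\<^sub>R u) \<bullet> u \<noteq> 0" using y gm by simp
        hence "0 \<le> Q (e + y *\<^sub>R u)" using psd1 zV by blast
        also have "Q (e + y *\<^sub>R u) = Q e + (2 * (e \<bullet> (M *v u)) - 2 * lam * (e \<bullet> u)) * y + Q u * y^2"
          unfolding Q_def using symd[of u e]
          by (simp add: matrix_vector_right_distrib matrix_vector_mult_scaleR inner_add_left inner_add_right
            algebra_simps power2_eq_square inner_commute[of u e])
        finally show "0 \<le> Q e + (2 * (e \<bullet> (M *v u)) - 2 * lam * (e \<bullet> u)) * y + Q u * y^2" .
      qed
      hence "0 \<le> Q e" by (rule quad_const)
      thus ?thesis unfolding Q_def .
    qed
  qed
  show ?thesis using kkt psd by blast
qed

lemma kkt_min_psd:
  fixes M :: "real^'n^'n"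
  assumes sym: "transpose M = M" and sub: "subspace V" and v: "v \<in> V" "v \<noteq> 0" and gm: "gm > 0"
    and k: "kktp M g V gm lam u" and mn: "\<forall>l' u'. kktp M g V gm l' u' \<longrightarrow> lam \<le> l'"
  shows "psdp M V lam"
proof -
  obtain lg ug where kg: "kktp M g V gm lg ug" and pg: "psdp M V lg"
    using trs_exists[OF sym sub v gm] by blast
  have "lam \<le> lg" using mn kg by blast
  moreover have "lg \<le> lam" using kkt_compare[OF sym kg k pg sub gm] .
  ultimately show ?thesis using pg by simp
qed

(* ---- part D ---- *)
definition LQ :: "real^'n^'n \<Rightarrow> real^'n \<Rightarrow> nat \<Rightarrow> real^'n" where
  "LQ M b j = fst (lanczos M b j)"
definition LB :: "real^'n^'n \<Rightarrow> real^'n \<Rightarrow> nat \<Rightarrow> real" where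
  "LB M b j = snd (snd (lanczos M b j))"

definition LW :: "real^'n^'n \<Rightarrow> real^'n \<Rightarrow> nat \<Rightarrow> real^'n" where
  "LW M b i = M *v LQ M b (Suc i) - (LQ M b (Suc i) \<bullet> (M *v LQ M b (Suc i))) *\<^sub>R LQ M b (Suc i)
     - LB M b i *\<^sub>R LQ M b i"

lemma lanczos_Suc_fst: "fst (lanczos M b (Suc j)) = fst (snd (lanczos M b j))"
  by (cases "lanczos M b j") (simp add: Let_def)

lemma LQ_Suc: "LQ M b (Suc j) = fst (snd (lanczos M b j))"
  unfolding LQ_def by (rule lanczos_Suc_fst)

lemma LQ_0: "LQ M b 0 = 0" unfolding LQ_def by simp
lemma LQ_1: "LQ M b (Suc 0) = b /\<^sub>R norm b" unfolding LQ_Suc by simp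
lemma LB_0: "LB M b 0 = norm b" unfolding LB_def by simp

lemma LQ_SS: "LQ M b (Suc (Suc i)) = LW M b i /\<^sub>R norm (LW M b i)"
  and LB_S: "LB M b (Suc i) = norm (LW M b i)"
proof -
  obtain qp q be where e: "lanczos M b i = (qp, q, be)" by (cases "lanczos M b i") auto
  have qp: "qp = LQ M b i" and q: "q = LQ M b (Suc i)" and be: "be = LB M b i"
    using e unfolding LQ_def LB_def by (auto simp: lanczos_Suc_fst Let_def)
  show "LQ M b (Suc (Suc i)) = LW M b i /\<^sub>R norm (LW M b i)"
    unfolding LQ_Suc LW_def by (simp add: e Let_def qp[symmetric] q[symmetric] be[symmetric])
  show "LB M b (Suc i) = norm (LW M b i)"
    unfolding LB_def LW_def by (simp add: e Let_def qp[symmetric] q[symmetric] be[symmetric])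
qed

lemma LW_eq: "LW M b i = LB M b (Suc i) *\<^sub>R LQ M b (Suc (Suc i))"
  unfolding LQ_SS LB_S by (cases "LW M b i = 0") auto

lemma lanczos_rec:
  "M *v LQ M b (Suc i) = LB M b (Suc i) *\<^sub>R LQ M b (Suc (Suc i))
     + (LQ M b (Suc i) \<bullet> (M *v LQ M b (Suc i))) *\<^sub>R LQ M b (Suc i) + LB M b i *\<^sub>R LQ M b i"
  using LW_eq[of M b i] unfolding LW_def by (simp add: algebra_simps)

lemma lq_LQ: "1 \<le> j \<Longrightarrow> lq M b j = LQ M b j"
  unfolding lq_def by (cases j) (auto simp: LQ_Suc)

lemma lbeta_LB: "1 \<le> j \<Longrightarrow> lbeta M b j = LB M b (j - 1)"
  unfolding lbeta_def LB_def by simp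

lemma LQ_inV:
  assumes sub: "subspace V" and bV: "b \<in> V" and MV: "\<And>x. M *v x \<in> V"
  shows "LQ M b j \<in> V"
proof -
  have "LQ M b j \<in> V \<and> LQ M b (Suc j) \<in> V"
  proof (induction j)
    case 0 show ?case using sub bV by (simp add: LQ_0 LQ_1 subspace_0 subspace_scale)
  next
    case (Suc j)
    have "LW M b j \<in> V" unfolding LW_def using Suc MV sub
      by (intro subspace_diff subspace_scale) auto
    thus ?case using Suc sub by (simp add: LQ_SS subspace_scale)
  qed
  thus ?thesis by simp
qed

definition orthJ :: "real^'n^'n \<Rightarrow> real^'n \<Rightarrow> nat \<Rightarrow> bool" where
  "orthJ M b J \<longleftrightarrow> (\<forall>i j. i \<le> J \<longrightarrow> j \<le> J \<longrightarrow> LQ M b i \<bullet> LQ M b j = (if i = j \<and> 1 \<le> i then 1 else 0))"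

lemma lanczos_orth:
  fixes M :: "real^'n^'n"
  assumes sym: "transpose M = M" and b: "b \<noteq> 0"
    and nz: "\<And>j. 1 \<le> j \<Longrightarrow> j < K \<Longrightarrow> LB M b j \<noteq> 0" and JK: "J \<le> K"
  shows "orthJ M b J"
  using JK
proof (induction J)
  case 0 show ?case unfolding orthJ_def by (simp add: LQ_0)
next
  case (Suc J)
  show ?case
  proof (cases J)
    case 0
    have "LQ M b (Suc 0) \<bullet> LQ M b (Suc 0) = 1" using b unfolding LQ_1
      by (simp add: dot_square_norm)
    thus ?thesis unfolding orthJ_def 0 by (auto simp: le_Suc_eq LQ_0)
  next
    case (Suc i)
    have IH: "orthJ M b (Suc i)" using Suc.IH Suc.prems \<open>J = Suc i\<close> by simp
    have O: "LQ M b x \<bullet> LQ M b y = (if x = y \<and> 1 \<le> x then 1 else 0)" if "x \<le> Suc i" "y \<le> Suc i" for x y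
      using IH that unfolding orthJ_def by blast
    have LBnz: "LB M b (Suc i) \<noteq> 0" using nz Suc.prems \<open>J = Suc i\<close> by simp
    let ?q = "LQ M b (Suc i)"
    have symd: "(M *v x) \<bullet> y = x \<bullet> (M *v y)" for x y using sym_dot[OF sym, of x y] by simp
    have Wj: "LW M b i \<bullet> LQ M b j = 0" if j: "j \<le> Suc i" for j
    proof -
      have expand: "LW M b i \<bullet> LQ M b j = (M *v ?q) \<bullet> LQ M b j - (?q \<bullet> (M *v ?q)) * (?q \<bullet> LQ M b j)
          - LB M b i * (LQ M b i \<bullet> LQ M b j)"
        unfolding LW_def by (simp add: inner_diff_left)
      consider "j = Suc i" | "j = i" | "j < i" using j by linarith
      thus ?thesis
      proof cases
        case 1
        have "LQ M b i \<bullet> ?q = 0" using O[of i "Suc i"] by simp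
        thus ?thesis using expand O[of "Suc i" "Suc i"] 1 by (simp add: inner_commute[of ?q "M *v ?q"])
      next
        case 2
        show ?thesis
        proof (cases i)
          case 0 thus ?thesis using 2 by (simp add: LQ_0)
        next
          case (Suc i0)
          have r: "M *v LQ M b i = LB M b i *\<^sub>R ?q + (LQ M b i \<bullet> (M *v LQ M b i)) *\<^sub>R LQ M b i
              + LB M b i0 *\<^sub>R LQ M b i0"
            using lanczos_rec[of M b i0] Suc by simp
          have "(M *v ?q) \<bullet> LQ M b i = ?q \<bullet> (M *v LQ M b i)" by (rule symd)
          also have "\<dots> = LB M b i" using O[of "Suc i" "Suc i"] O[of "Suc i" i] O[of "Suc i" i0] Suc
            by (subst r) (simp add: inner_add_right)
          finally show ?thesis using expand 2 O[of "Suc i" i] O[of i i] Suc by simp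
        qed
      next
        case 3
        show ?thesis
        proof (cases j)
          case 0 thus ?thesis by (simp add: LQ_0)
        next
          case (Suc j0)
          have r: "M *v LQ M b j = LB M b j *\<^sub>R LQ M b (Suc j) + (LQ M b j \<bullet> (M *v LQ M b j)) *\<^sub>R LQ M b j
              + LB M b j0 *\<^sub>R LQ M b j0"
            using lanczos_rec[of M b j0] Suc by simp
          have "(M *v ?q) \<bullet> LQ M b j = ?q \<bullet> (M *v LQ M b j)" by (rule symd)
          also have "\<dots> = 0" using O[of "Suc i" "Suc j"] O[of "Suc i" j] O[of "Suc i" j0] Suc 3
            by (subst r) (simp add: inner_add_right)
          finally show ?thesis using expand 3 O[of "Suc i" j] O[of i j] Suc by simp
        qed
      qed
    qed
    have Wnz: "LW M b i \<noteq> 0" using LBnz LB_S[of M b i] by auto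
    have new: "LQ M b (Suc (Suc i)) \<bullet> LQ M b j = 0" if "j \<le> Suc i" for j
      using Wj[OF that] unfolding LQ_SS by simp
    have new1: "LQ M b (Suc (Suc i)) \<bullet> LQ M b (Suc (Suc i)) = 1"
      unfolding LQ_SS using Wnz by (simp add: dot_square_norm)
    show ?thesis unfolding orthJ_def \<open>J = Suc i\<close>
    proof (intro allI impI)
      fix x y assume x: "x \<le> Suc (Suc i)" and y: "y \<le> Suc (Suc i)"
      show "LQ M b x \<bullet> LQ M b y = (if x = y \<and> 1 \<le> x then 1 else 0)"
      proof (cases "x = Suc (Suc i)")
        case True
        thus ?thesis using new new1 y by (cases "y = Suc (Suc i)") auto
      next
        case False
        hence x': "x \<le> Suc i" using x by simp
        show ?thesis
        proof (cases "y = Suc (Suc i)")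
          case True thus ?thesis using new[OF x'] x' by (simp add: inner_commute)
        next
          case False thus ?thesis using O x' y by simp
        qed
      qed
    qed
  qed
qed

lemma M_span_step:
  assumes "x \<in> span (LQ M b ` {1..n})"
  shows "M *v x \<in> span (LQ M b ` {1..Suc n})"
proof -
  let ?T = "span (LQ M b ` {1..Suc n})"
  have "span (LQ M b ` {1..n}) \<subseteq> {x. M *v x \<in> ?T}"
  proof (rule span_minimal)
    show "LQ M b ` {1..n} \<subseteq> {x. M *v x \<in> ?T}"
    proof
      fix y assume "y \<in> LQ M b ` {1..n}"
      then obtain j where j: "1 \<le> j" "j \<le> n" "y = LQ M b j" by auto
      then obtain j0 where j0: "j = Suc j0" by (cases j) auto
      have inT: "LQ M b l \<in> ?T" if "l \<le> Suc n" for l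
      proof (cases l)
        case 0 thus ?thesis by (simp add: LQ_0 span_zero)
      next
        case (Suc l0) thus ?thesis using that by (intro span_base) auto
      qed
      have "M *v y \<in> ?T" unfolding j(3) j0
        apply (subst lanczos_rec)
        using j j0 by (intro span_add span_scale inT) auto
      thus "y \<in> {x. M *v x \<in> ?T}" by simp
    qed
    show "subspace {x. M *v x \<in> ?T}"
      unfolding subspace_def by (auto simp: matrix_vector_right_distrib matrix_vector_mult_scaleR
         span_add span_scale span_zero)
  qed
  thus ?thesis using assms by blast
qed

lemma krylov_pow_span: "((((*v) M) ^^ i) b) \<in> span (LQ M b ` {1..Suc i})"
proof (induction i)
  case 0
  have "b = norm b *\<^sub>R LQ M b (Suc 0)" unfolding LQ_1 by (cases "b = 0") auto
  also have "\<dots> \<in> span (LQ M b ` {1..Suc 0})" by (intro span_scale span_base) auto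
  finally show ?case by simp
next
  case (Suc i) thus ?case using M_span_step by simp
qed

lemma krylov_sub:
  "krylov M b k \<subseteq> span (LQ M b ` {1..k})"
  unfolding krylov_def
proof (rule span_minimal)
  show "(\<lambda>i. (((*v) M) ^^ i) b) ` {..<k} \<subseteq> span (LQ M b ` {1..k})"
  proof
    fix y assume "y \<in> (\<lambda>i. (((*v) M) ^^ i) b) ` {..<k}"
    then obtain i where i: "i < k" "y = (((*v) M) ^^ i) b" by auto
    have "span (LQ M b ` {1..Suc i}) \<subseteq> span (LQ M b ` {1..k})" using i by (intro span_mono image_mono) auto
    thus "y \<in> span (LQ M b ` {1..k})" using krylov_pow_span[where M=M and i=i and b=b] i by auto
  qed
qed (rule subspace_span)

(* ---- part E ---- *)
declare transpose_matrix_vector[simp del]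

lemma matrix_diff_ldistrib': "(A::real^'m^'n) ** (B - B') = A ** B - A ** B'"
  by (simp add: matrix_matrix_mult_def vec_eq_iff sum_subtractf algebra_simps)

lemma dotT: "(x::real^'m) \<bullet> (transpose (C::real^'m^'n) *v y) = (C *v x) \<bullet> y"
  by (metis dot_lmul_matrix vector_transpose_matrix)

lemma transpose_diff': "transpose (A - B) = transpose A - transpose (B::real^'m^'n)"
  by (simp add: transpose_def vec_eq_iff)

lemma transpose_uminus': "transpose (- A) = - transpose (A::real^'m^'n)"
  by (simp add: transpose_def vec_eq_iff)

lemma neg_mv: "(- A) *v x = - (A *v (x::real^'m))" for A :: "real^'m^'n"
  by (simp add: matrix_vector_mult_def vec_eq_iff sum_negf)

lemma scaleR_mat_mv: "(c *\<^sub>R mat 1) *v x = c *\<^sub>R (x::real^'n)"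
  by (metis matrix_vector_mul_lid scaleR_matrix_vector_assoc)

lemma CtC_invertible:
  fixes C :: "real^'m^'n"
  assumes "rank C = CARD('m)"
  shows "invertible (transpose C ** C)"
proof -
  have injC: "inj ((*v) C)" using assms full_rank_injective by blast
  have "inj ((*v) (transpose C ** C))"
  proof (rule linear_injective_0[THEN iffD2])
    show "linear ((*v) (transpose C ** C))" by simp
    show "\<forall>z. (transpose C ** C) *v z = 0 \<longrightarrow> z = 0"
    proof (intro allI impI)
      fix z assume "(transpose C ** C) *v z = 0"
      hence "z \<bullet> (transpose C *v (C *v z)) = 0" by (simp add: matrix_vector_mul_assoc)
      hence "(C *v z) \<bullet> (C *v z) = 0" by (simp only: dotT)
      hence "C *v z = 0" by simp
      thus "z = 0" using injC by (metis injD matrix_vector_mult_0_right)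
    qed
  qed
  thus ?thesis using matrix_left_invertible_injective invertible_left_inverse by blast
qed

lemma matrix_inv_props:
  fixes G :: "real^'m^'m"
  assumes "invertible G"
  shows "G ** matrix_inv G = mat 1" "matrix_inv G ** G = mat 1"
proof -
  have "\<exists>A'. G ** A' = mat 1 \<and> A' ** G = mat 1" using assms unfolding invertible_def by blast
  hence "G ** matrix_inv G = mat 1 \<and> matrix_inv G ** G = mat 1"
    unfolding matrix_inv_def by (rule someI_ex)
  thus "G ** matrix_inv G = mat 1" "matrix_inv G ** G = mat 1" by auto
qed

lemma matrix_inv_sym:
  fixes G :: "real^'m^'m"
  assumes "invertible G" "transpose G = G"
  shows "transpose (matrix_inv G) = matrix_inv G"
proof -
  have a: "G ** matrix_inv G = mat 1" and b: "matrix_inv G ** G = mat 1" using matrix_inv_props[OF assms(1)] by auto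
  have "transpose (matrix_inv G) ** G = mat 1"
    using arg_cong[OF a, of transpose] assms(2) by (simp add: matrix_transpose_mul)
  hence "transpose (matrix_inv G) = transpose (matrix_inv G) ** (G ** matrix_inv G)" using a by simp
  also have "\<dots> = (transpose (matrix_inv G) ** G) ** matrix_inv G" by (simp add: matrix_mul_assoc)
  also have "\<dots> = matrix_inv G" using \<open>transpose (matrix_inv G) ** G = mat 1\<close> by simp
  finally show ?thesis .
qed

locale setting =
  fixes A :: "real^'n^'n" and C :: "real^'m^'n" and b :: "real^'m"
  assumes symA: "transpose A = A" and rankC: "rank C = CARD('m)"
begin

definition "G = transpose C ** C"
definition "Gi = matrix_inv G"
definition "P = projP C"
definition "M = P ** A ** P"
definition "n0 = n0vec C b"
definition "b0 = b0vec A C b"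
definition "V = {y. transpose C *v y = 0}"

lemma G_inv: "invertible G" unfolding G_def using CtC_invertible[OF rankC] .
lemma G_sym: "transpose G = G" unfolding G_def by (simp add: matrix_transpose_mul)
lemma GGi: "G ** Gi = mat 1" and GiG: "Gi ** G = mat 1" unfolding Gi_def using matrix_inv_props[OF G_inv] by auto
lemma Gi_sym: "transpose Gi = Gi" unfolding Gi_def using matrix_inv_sym[OF G_inv G_sym] .

lemma P_eq: "P = mat 1 - C ** Gi ** transpose C"
  unfolding P_def projP_def Gi_def G_def by simp

lemma P_sym: "transpose P = P"
  unfolding P_eq by (simp add: transpose_diff' matrix_transpose_mul Gi_sym matrix_mul_assoc)

lemma CtP: "transpose C ** P = 0"
proof -
  have "transpose C ** P = transpose C - (G ** Gi) ** transpose C"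
    unfolding P_eq G_def by (simp add: matrix_add_ldistrib matrix_diff_ldistrib' matrix_mul_assoc)
  thus ?thesis using GGi by simp
qed

lemma CtPv: "transpose C *v (P *v x) = 0"
  using CtP by (simp add: matrix_vector_mul_assoc)

lemma subV: "subspace V"
  unfolding V_def subspace_def by (auto simp: matrix_vector_right_distrib matrix_vector_mult_scaleR)

lemma P_V: "P *v x \<in> V" unfolding V_def using CtPv by simp

lemma P_id: "y \<in> V \<Longrightarrow> P *v y = y"
  unfolding V_def P_eq by (simp add: matrix_vector_mult_diff_rdistrib matrix_vector_mul_assoc[symmetric])

lemma P_dot: "y \<in> V \<Longrightarrow> y \<bullet> (P *v z) = y \<bullet> z"
proof -
  assume y: "y \<in> V"
  have "y \<bullet> (P *v z) = (P *v y) \<bullet> z" using sym_dot[OF P_sym] .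
  thus ?thesis using P_id[OF y] by simp
qed

lemma M_sym: "transpose M = M"
  unfolding M_def by (simp add: matrix_transpose_mul P_sym symA matrix_mul_assoc)

lemma M_V: "M *v x \<in> V" unfolding M_def by (metis P_V matrix_vector_mul_assoc)

lemma M_quad: "y \<in> V \<Longrightarrow> y \<bullet> (M *v y) = y \<bullet> (A *v y)"
  unfolding M_def by (simp add: matrix_vector_mul_assoc[symmetric] P_dot P_id)

lemma Ct_n0: "transpose C *v n0 = b"
proof -
  have "transpose C *v n0 = (G ** Gi) *v b"
    unfolding n0_def n0vec_def G_def Gi_def by (simp add: matrix_vector_mul_assoc matrix_mul_assoc)
  thus ?thesis using GGi by simp
qed

lemma n0_orth: "y \<in> V \<Longrightarrow> y \<bullet> n0 = 0"
proof -
  assume "y \<in> V"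
  have "n0 = C *v (Gi *v b)" unfolding n0_def n0vec_def Gi_def G_def by (simp add: matrix_vector_mul_assoc)
  hence "y \<bullet> n0 = (transpose C *v y) \<bullet> (Gi *v b)" using dotT[of "Gi *v b" C y]
    by (simp add: inner_commute)
  thus ?thesis using \<open>y \<in> V\<close> unfolding V_def by simp
qed

lemma b0_V: "b0 \<in> V" unfolding b0_def b0vec_def using P_V P_def by simp

lemma b0_dot: "w \<in> V \<Longrightarrow> b0 \<bullet> w = (A *v n0) \<bullet> w"
  unfolding b0_def b0vec_def P_def[symmetric] n0_def[symmetric]
  using P_dot by (simp add: inner_commute)

lemma h_split: "w \<in> V \<Longrightarrow> hq A (n0 + w) = hq A n0 + fq M b0 w"
proof -
  assume w: "w \<in> V"
  have s: "n0 \<bullet> (A *v w) = (A *v n0) \<bullet> w" using sym_dot[OF symA] .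
  have s2: "w \<bullet> (A *v n0) = (A *v n0) \<bullet> w" by (simp add: inner_commute)
  show ?thesis unfolding hq_def fq_def
    using b0_dot[OF w] M_quad[OF w] s s2
    by (simp add: matrix_vector_right_distrib inner_add_left inner_add_right)
qed

lemma crq_iff:
  assumes "norm n0 < 1"
  shows "crq_feasible C b v \<longleftrightarrow> v - n0 \<in> V \<and> norm (v - n0) = gam C b"
proof -
  have "norm (n0vec C b) \<le> 1" using assms unfolding n0_def by simp
  hence nn1: "(norm (n0vec C b))^2 \<le> 1" by (simp add: power_le_one)
  have g2: "(gam C b)^2 = 1 - (norm n0)^2" using nn1 unfolding gam_def n0_def by simp
  have "transpose C *v v = b \<longleftrightarrow> v - n0 \<in> V"
    unfolding V_def using Ct_n0 by (auto simp: matrix_vector_mult_diff_distrib)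
  moreover have "v \<bullet> v = 1 \<longleftrightarrow> norm (v - n0) = gam C b" if "v - n0 \<in> V"
  proof -
    have o: "(v - n0) \<bullet> n0 = 0" using n0_orth[OF that] .
    have "v \<bullet> v = n0 \<bullet> n0 + (v - n0) \<bullet> (v - n0)"
      using o by (simp add: inner_diff_left inner_diff_right inner_commute)
    hence "v \<bullet> v = (norm n0)^2 + (norm (v - n0))^2" by (simp add: power2_norm_eq_inner)
    moreover have "gam C b \<ge> 0" unfolding gam_def using nn1 by simp
    ultimately show ?thesis using g2
      by (smt (verit) norm_ge_zero power2_eq_iff_nonneg)
  qed
  ultimately show ?thesis unfolding crq_feasible_def by blast
qed

lemma lg_iff: "lg_feasible A C b lam u \<longleftrightarrow> kktp M b0 V (gam C b) lam u"
proof
  assume "lg_feasible A C b lam u"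
  hence e: "M *v u - lam *\<^sub>R u = - b0" and n: "norm u = gam C b" and uV: "u \<in> V"
    unfolding lg_feasible_def M_def[unfolded P_def] b0_def V_def
    by (auto simp: matrix_vector_mult_diff_rdistrib scaleR_mat_mv P_def)
  have "M *v u - lam *\<^sub>R u + b0 = 0" using e by simp
  thus "kktp M b0 V (gam C b) lam u" unfolding kktp_def using n uV by simp
next
  assume k: "kktp M b0 V (gam C b) lam u"
  define r where "r = M *v u - lam *\<^sub>R u + b0"
  have uV: "u \<in> V" and n: "norm u = gam C b" using k unfolding kktp_def by auto
  have rV: "r \<in> V" unfolding r_def using M_V uV b0_V subV
    by (intro subspace_add subspace_diff subspace_scale) auto
  have "r \<bullet> r = 0" using k rV unfolding kktp_def r_def by blast
  hence "r = 0" by simp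
  hence "M *v u - lam *\<^sub>R u = - b0" unfolding r_def by (simp add: algebra_simps eq_neg_iff_add_eq_0)
  thus "lg_feasible A C b lam u" unfolding lg_feasible_def using n uV
    unfolding M_def P_def b0_def V_def
    by (simp add: matrix_vector_mult_diff_rdistrib scaleR_mat_mv)
qed

end

(* ---- part F ---- *)
declare transpose_matrix_vector[simp del]

lemma eig_facts:
  fixes H :: "real^'k^'k"
  assumes sym: "transpose H = H"
  shows "finite (eigvals H)" "eigvals H \<noteq> {}"
    "\<And>y. Min (eigvals H) * (y \<bullet> y) \<le> y \<bullet> (H *v y)"
    "\<And>y. y \<bullet> (H *v y) \<le> Max (eigvals H) * (y \<bullet> y)"
proof -
  let ?E = "eigvals H"
  define e where "e t = (SOME x. x \<noteq> 0 \<and> H *v x = t *\<^sub>R x)" for t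
  have e: "e t \<noteq> 0 \<and> H *v e t = t *\<^sub>R e t" if "t \<in> ?E" for t
    using that unfolding eigvals_def e_def by (rule CollectE) (rule someI_ex)
  have symd: "(H *v x) \<bullet> y = x \<bullet> (H *v y)" for x y using sym_dot[OF sym, of x y] by simp
  have inj: "inj_on e ?E"
  proof (rule inj_onI)
    fix s t assume s: "s \<in> ?E" and t: "t \<in> ?E" and st: "e s = e t"
    have "s *\<^sub>R e s = t *\<^sub>R e s" using e[OF s] e[OF t] st by metis
    thus "s = t" using e[OF s] by simp
  qed
  have po: "pairwise orthogonal (e ` ?E)"
    unfolding pairwise_def orthogonal_def
  proof (intro ballI impI)
    fix x y assume x: "x \<in> e ` ?E" and y: "y \<in> e ` ?E" and xy: "x \<noteq> y"
    obtain s t where s: "s \<in> ?E" "x = e s" and t: "t \<in> ?E" "y = e t" using x y by auto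
    have "s \<noteq> t" using xy s t by auto
    have "s * (x \<bullet> y) = (H *v x) \<bullet> y" using e[OF s(1)] s(2) by simp
    also have "\<dots> = x \<bullet> (H *v y)" by (rule symd)
    also have "\<dots> = t * (x \<bullet> y)" using e[OF t(1)] t(2) by simp
    finally have "(s - t) * (x \<bullet> y) = 0" by (simp add: algebra_simps)
    thus "x \<bullet> y = 0" using \<open>s \<noteq> t\<close> by simp
  qed
  have "0 \<notin> e ` ?E" using e by auto
  hence "independent (e ` ?E)" using pairwise_orthogonal_independent[OF po] by blast
  hence "finite (e ` ?E)" using independent_imp_finite by blast
  thus fin: "finite ?E" using finite_imageD[OF _ inj] by blast
  have ax: "(axis undefined 1 :: real^'k) \<noteq> 0" by (simp add: axis_eq_0_iff)
  obtain l u where k: "kktp H 0 UNIV 1 l u" and p: "psdp H UNIV l"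
    using trs_exists[OF sym subspace_UNIV UNIV_I ax, of 1 0] by auto
  have "(H *v u - l *\<^sub>R u) \<bullet> (H *v u - l *\<^sub>R u) = 0" using k unfolding kktp_def by auto
  hence "H *v u = l *\<^sub>R u" by simp
  moreover have "u \<noteq> 0" using k unfolding kktp_def by auto
  ultimately have lE: "l \<in> ?E" unfolding eigvals_def by blast
  thus "?E \<noteq> {}" by auto
  show "Min ?E * (y \<bullet> y) \<le> y \<bullet> (H *v y)" for y
  proof -
    have "Min ?E \<le> l" using fin lE by simp
    hence "Min ?E * (y \<bullet> y) \<le> l * (y \<bullet> y)" by (simp add: mult_right_mono)
    also have "\<dots> \<le> y \<bullet> (H *v y)" using p unfolding psdp_def by auto
    finally show ?thesis .
  qed
  have symn: "transpose (- H) = - H" using sym by (simp add: transpose_uminus')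
  obtain l2 u2 where k2: "kktp (- H) 0 UNIV 1 l2 u2" and p2: "psdp (- H) UNIV l2"
    using trs_exists[OF symn subspace_UNIV UNIV_I ax, of 1 0] by auto
  have "((- H) *v u2 - l2 *\<^sub>R u2) \<bullet> ((- H) *v u2 - l2 *\<^sub>R u2) = 0" using k2 unfolding kktp_def by auto
  hence "(- H) *v u2 = l2 *\<^sub>R u2" by simp
  hence "H *v u2 = (- l2) *\<^sub>R u2" by (simp add: neg_mv) (metis minus_minus)
  moreover have "u2 \<noteq> 0" using k2 unfolding kktp_def by auto
  ultimately have lE2: "- l2 \<in> ?E" unfolding eigvals_def by blast
  show "y \<bullet> (H *v y) \<le> Max ?E * (y \<bullet> y)" for y
  proof -
    have "l2 * (y \<bullet> y) \<le> y \<bullet> ((- H) *v y)" using p2 unfolding psdp_def by auto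
    hence "y \<bullet> (H *v y) \<le> (- l2) * (y \<bullet> y)" by (simp add: neg_mv)
    also have "- l2 \<le> Max ?E" using fin lE2 by simp
    hence "(- l2) * (y \<bullet> y) \<le> Max ?E * (y \<bullet> y)" by (intro mult_right_mono) auto
    finally show ?thesis .
  qed
qed

lemma mv_sum: "(M::real^'n^'m) *v (\<Sum>j\<in>S. f j) = (\<Sum>j\<in>S. M *v f j)"
  by (induction S rule: infinite_finite_induct) (auto simp: matrix_vector_right_distrib)

lemma coord_dot:
  fixes q :: "nat \<Rightarrow> real^'n"
  assumes orth: "\<And>i j. i \<in> {1..k} \<Longrightarrow> j \<in> {1..k} \<Longrightarrow> q i \<bullet> q j = (if i = j then 1 else 0)"
    and i: "i \<in> {1..k}"
  shows "q i \<bullet> (\<Sum>j=1..k. x j *\<^sub>R q j) = x i"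
proof -
  have "q i \<bullet> (\<Sum>j=1..k. x j *\<^sub>R q j) = (\<Sum>j=1..k. x j * (q i \<bullet> q j))"
    by (simp add: inner_sum_right)
  also have "\<dots> = (\<Sum>j=1..k. if i = j then x j else 0)"
    by (rule sum.cong) (auto simp: orth[OF i])
  also have "\<dots> = x i" using i by (simp add: sum.delta)
  finally show ?thesis .
qed

lemma coord_repr:
  fixes q :: "nat \<Rightarrow> real^'n"
  assumes orth: "\<And>i j. i \<in> {1..k} \<Longrightarrow> j \<in> {1..k} \<Longrightarrow> q i \<bullet> q j = (if i = j then 1 else 0)"
    and u: "u \<in> span (q ` {1..k})"
  shows "u = (\<Sum>j=1..k. (q j \<bullet> u) *\<^sub>R q j)"
proof -
  have "span (q ` {1..k}) \<subseteq> {u. u = (\<Sum>j=1..k. (q j \<bullet> u) *\<^sub>R q j)}"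
  proof (rule span_minimal)
    show "q ` {1..k} \<subseteq> {u. u = (\<Sum>j=1..k. (q j \<bullet> u) *\<^sub>R q j)}"
    proof
      fix y assume "y \<in> q ` {1..k}"
      then obtain i where i: "i \<in> {1..k}" "y = q i" by auto
      have "(\<Sum>j=1..k. (q j \<bullet> q i) *\<^sub>R q j) = (\<Sum>j=1..k. if j = i then q i else 0)"
        by (rule sum.cong) (auto simp: orth[OF _ i(1)])
      also have "\<dots> = q i" using i by (simp add: sum.delta')
      finally show "y \<in> {u. u = (\<Sum>j=1..k. (q j \<bullet> u) *\<^sub>R q j)}" using i by simp
    qed
    have sc: "c *\<^sub>R x = (\<Sum>j=1..k. (q j \<bullet> (c *\<^sub>R x)) *\<^sub>R q j)"
      if "x = (\<Sum>j=1..k. (q j \<bullet> x) *\<^sub>R q j)" for c x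
    proof -
      have "c *\<^sub>R x = c *\<^sub>R (\<Sum>j=1..k. (q j \<bullet> x) *\<^sub>R q j)" using that by (rule arg_cong)
      also have "\<dots> = (\<Sum>j=1..k. (q j \<bullet> (c *\<^sub>R x)) *\<^sub>R q j)" by (simp add: scaleR_sum_right)
      finally show ?thesis .
    qed
    let ?T = "{u. u = (\<Sum>j=1..k. (q j \<bullet> u) *\<^sub>R q j)}"
    have z: "0 \<in> ?T" by simp
    have ad: "x + y = (\<Sum>j=1..k. (q j \<bullet> (x + y)) *\<^sub>R q j)"
      if "x = (\<Sum>j=1..k. (q j \<bullet> x) *\<^sub>R q j)" "y = (\<Sum>j=1..k. (q j \<bullet> y) *\<^sub>R q j)" for x y
    proof -
      have "x + y = (\<Sum>j=1..k. (q j \<bullet> x) *\<^sub>R q j) + (\<Sum>j=1..k. (q j \<bullet> y) *\<^sub>R q j)"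
        using that by (rule arg_cong2)
      also have "\<dots> = (\<Sum>j=1..k. (q j \<bullet> (x + y)) *\<^sub>R q j)"
        by (simp add: inner_add_right scaleR_add_left sum.distrib)
      finally show ?thesis .
    qed
    have a: "\<forall>x\<in>?T. \<forall>y\<in>?T. x + y \<in> ?T"
    proof (intro ballI)
      fix x y assume "x \<in> ?T" "y \<in> ?T"
      hence "x + y = (\<Sum>j=1..k. (q j \<bullet> (x + y)) *\<^sub>R q j)" using ad by blast
      thus "x + y \<in> ?T" by (simp only: mem_Collect_eq)
    qed
    have s: "\<forall>c. \<forall>x\<in>?T. c *\<^sub>R x \<in> ?T"
    proof (intro allI ballI)
      fix c x assume "x \<in> ?T"
      hence "c *\<^sub>R x = (\<Sum>j=1..k. (q j \<bullet> (c *\<^sub>R x)) *\<^sub>R q j)" using sc by blast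
      thus "c *\<^sub>R x \<in> ?T" by (simp only: mem_Collect_eq)
    qed
    show "subspace ?T" unfolding subspace_def using z a s by blast
  qed
  thus ?thesis using u by blast
qed

lemma coord_norm2:
  fixes q :: "nat \<Rightarrow> real^'n"
  assumes orth: "\<And>i j. i \<in> {1..k} \<Longrightarrow> j \<in> {1..k} \<Longrightarrow> q i \<bullet> q j = (if i = j then 1 else 0)"
  shows "(\<Sum>j=1..k. x j *\<^sub>R q j) \<bullet> (\<Sum>j=1..k. x j *\<^sub>R q j) = (\<Sum>i=1..k. (x i)^2)"
proof -
  have "(\<Sum>j=1..k. x j *\<^sub>R q j) \<bullet> (\<Sum>j=1..k. x j *\<^sub>R q j)
      = (\<Sum>i=1..k. x i * (q i \<bullet> (\<Sum>j=1..k. x j *\<^sub>R q j)))"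
    by (simp add: inner_sum_left)
  also have "\<dots> = (\<Sum>i=1..k. (x i)^2)"
  proof (rule sum.cong)
    fix i assume ik: "i \<in> {1..k}"
    show "x i * (q i \<bullet> (\<Sum>j=1..k. x j *\<^sub>R q j)) = (x i)^2"
      using coord_dot[OF orth ik] by (simp add: power2_eq_square)
  qed simp
  finally show ?thesis .
qed

lemma rlg_to_kkt:
  fixes M :: "real^'n^'n"
  assumes orth: "\<And>i j. i \<in> {1..k} \<Longrightarrow> j \<in> {1..k} \<Longrightarrow> lq M b0 i \<bullet> lq M b0 j = (if i = j then 1 else 0)"
    and q1: "b0 = norm b0 *\<^sub>R lq M b0 1" and k: "1 \<le> k"
    and f: "rlg_feasible M b0 g k lam x"
  shows "kktp M b0 (span (lq M b0 ` {1..k})) g lam (\<Sum>j=1..k. x j *\<^sub>R lq M b0 j)"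
proof -
  let ?q = "lq M b0" and ?U = "span (lq M b0 ` {1..k})"
  let ?u = "\<Sum>j=1..k. x j *\<^sub>R ?q j"
  have uU: "?u \<in> ?U" by (intro span_sum span_scale span_base) auto
  have "norm ?u = sqrt (\<Sum>i=1..k. (x i)^2)" unfolding norm_eq_sqrt_inner using coord_norm2[OF orth, where x=x] by simp
  hence nu: "norm ?u = g" using f unfolding rlg_feasible_def by simp
  define r where "r = M *v ?u - lam *\<^sub>R ?u + b0"
  have qb: "?q i \<bullet> b0 = (if i = 1 then norm b0 else 0)" if "i \<in> {1..k}" for i
    using orth[OF that, of 1] k that by (subst q1) auto
  have comp: "?q i \<bullet> r = 0" if i: "i \<in> {1..k}" for i
  proof -
    have "?q i \<bullet> (M *v ?u) = (\<Sum>j=1..k. Tk M b0 i j * x j)"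
      unfolding Tk_def by (simp add: mv_sum matrix_vector_mult_scaleR inner_sum_right
          mult.commute)
    moreover have "(\<Sum>j=1..k. Tk M b0 i j * x j) - lam * x i = (if i = 1 then - norm b0 else 0)"
      using f i unfolding rlg_feasible_def by blast
    ultimately show ?thesis unfolding r_def using coord_dot[OF orth i, of x] qb[OF i]
      by (simp add: inner_diff_right inner_add_right)
  qed
  have "?U \<subseteq> {w. w \<bullet> r = 0}"
  proof (rule span_minimal)
    show "?q ` {1..k} \<subseteq> {w. w \<bullet> r = 0}" using comp by auto
    show "subspace {w. w \<bullet> r = 0}" unfolding subspace_def by (auto simp: inner_add_left)
  qed
  thus ?thesis unfolding kktp_def using uU nu r_def by auto
qed

lemma kkt_to_rlg:
  fixes M :: "real^'n^'n"
  assumes orth: "\<And>i j. i \<in> {1..k} \<Longrightarrow> j \<in> {1..k} \<Longrightarrow> lq M b0 i \<bullet> lq M b0 j = (if i = j then 1 else 0)"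
    and q1: "b0 = norm b0 *\<^sub>R lq M b0 1" and k: "1 \<le> k"
    and kk: "kktp M b0 (span (lq M b0 ` {1..k})) g lam u"
  shows "rlg_feasible M b0 g k lam (\<lambda>j. lq M b0 j \<bullet> u)"
proof -
  let ?q = "lq M b0" and ?U = "span (lq M b0 ` {1..k})"
  let ?x = "\<lambda>j. lq M b0 j \<bullet> u"
  have uU: "u \<in> ?U" and nu: "norm u = g" and kw: "\<forall>w\<in>?U. w \<bullet> (M *v u - lam *\<^sub>R u + b0) = 0"
    using kk unfolding kktp_def by auto
  have repr: "u = (\<Sum>j=1..k. ?x j *\<^sub>R ?q j)" using coord_repr[OF orth uU] .
  have qb: "?q i \<bullet> b0 = (if i = 1 then norm b0 else 0)" if "i \<in> {1..k}" for i
    using orth[OF that, of 1] k that by (subst q1) auto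
  have eqs: "(\<Sum>j=1..k. Tk M b0 i j * ?x j) - lam * ?x i = (if i = 1 then - norm b0 else 0)"
    if i: "i \<in> {1..k}" for i
  proof -
    have "?q i \<bullet> (M *v u) = (\<Sum>j=1..k. Tk M b0 i j * ?x j)"
      unfolding Tk_def by (subst repr) (simp add: mv_sum matrix_vector_mult_scaleR inner_sum_right
          mult.commute)
    moreover have "?q i \<in> ?U" using i by (intro span_base imageI)
    hence "?q i \<bullet> (M *v u - lam *\<^sub>R u + b0) = 0" using kw by blast
    ultimately show ?thesis using qb[OF i] by (cases "i = 1") (auto simp: inner_diff_right inner_add_right)
  qed
  have uu: "u \<bullet> u = (\<Sum>i=1..k. (?x i)^2)"
    by (subst (1 2) repr) (rule coord_norm2[OF orth])
  have "sqrt (\<Sum>i=1..k. (?x i)^2) = g"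
    using nu unfolding uu[symmetric] norm_eq_sqrt_inner .
  thus ?thesis unfolding rlg_feasible_def using eqs by blast
qed

(* ---- part G ---- *)
declare transpose_matrix_vector[simp del]

context setting
begin

lemma Meq: "projP C ** A ** projP C = M" unfolding M_def P_def ..
lemma b0eq: "b0vec A C b = b0" unfolding b0_def ..
lemma n0eq: "n0vec C b = n0" unfolding n0_def ..

lemma psd_zero:
  assumes p: "psdp M V l" and z: "z \<in> V" and qz: "z \<bullet> (M *v z) - l * (z \<bullet> z) = 0"
  shows "M *v z - l *\<^sub>R z = 0"
proof -
  have symd: "x \<bullet> (M *v y) = y \<bullet> (M *v x)" for x y using sym_dot[OF M_sym, of x y] by (simp add: inner_commute)
  have o: "w \<bullet> (M *v z - l *\<^sub>R z) = 0" if w: "w \<in> V" for w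
  proof -
    have "\<forall>t. 0 \<le> (2 * (w \<bullet> (M *v z - l *\<^sub>R z))) * t + (w \<bullet> (M *v w) - l * (w \<bullet> w)) * t^2"
    proof
      fix t :: real
      have "z + t *\<^sub>R w \<in> V" using z w subV by (auto intro: subspace_add subspace_scale)
      hence "0 \<le> (z + t *\<^sub>R w) \<bullet> (M *v (z + t *\<^sub>R w)) - l * ((z + t *\<^sub>R w) \<bullet> (z + t *\<^sub>R w))"
        using p unfolding psdp_def by blast
      also have "\<dots> = (z \<bullet> (M *v z) - l * (z \<bullet> z)) + (2 * (w \<bullet> (M *v z - l *\<^sub>R z))) * t
          + (w \<bullet> (M *v w) - l * (w \<bullet> w)) * t^2"
        using symd[of z w]
        by (simp add: matrix_vector_right_distrib matrix_vector_mult_scaleR inner_add_left inner_add_right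
            inner_diff_right algebra_simps power2_eq_square inner_commute[of z w])
      finally show "0 \<le> (2 * (w \<bullet> (M *v z - l *\<^sub>R z))) * t + (w \<bullet> (M *v w) - l * (w \<bullet> w)) * t^2"
        using qz by simp
    qed
    hence "2 * (w \<bullet> (M *v z - l *\<^sub>R z)) = 0" by (rule quad_lin0)
    thus ?thesis by simp
  qed
  have "M *v z - l *\<^sub>R z \<in> V" using M_V z subV by (auto intro: subspace_diff subspace_scale)
  hence "(M *v z - l *\<^sub>R z) \<bullet> (M *v z - l *\<^sub>R z) = 0" using o by blast
  thus ?thesis by simp
qed

lemma gam_facts:
  assumes "norm n0 < 1"
  shows "(gam C b)^2 = 1 - (norm n0)^2" "gam C b > 0"
proof -
  have "(norm n0)^2 < 1" using assms by (simp add: power_less_one_iff abs_square_less_1)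
  thus "(gam C b)^2 = 1 - (norm n0)^2" "gam C b > 0" unfolding gam_def n0_def by simp_all
qed

lemma main:
  fixes S1 :: "real^'k^'n"
    and vs :: "real^'n" and lams :: real and us :: "real^'n"
    and k :: nat and mu :: real and x :: "nat \<Rightarrow> real" and v :: "real^'n"
  assumes n0: "norm (n0vec C b) < 1"
    and b0: "b0vec A C b \<noteq> 0"
    and S1_orth: "transpose S1 ** S1 = mat 1"
    and S1_span: "range ((*v) S1) = {y. transpose C *v y = 0}"
    and easy: "qep_easy_case A C b"
    and vs_min: "crq_minimizer A C b vs"
    and vs_unique: "\<forall>w. crq_minimizer A C b w \<longrightarrow> w = vs"
    and lg_min: "lg_minimizer A C b lams us"
    and k: "1 \<le> k" "k \<le> kmax (projP C ** A ** projP C) (b0vec A C b)"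
    and rlg: "rlg_minimizer (projP C ** A ** projP C) (b0vec A C b) (gam C b) k mu x"
    and v_kry: "v \<in> (\<lambda>y. n0vec C b + y) ` krylov (projP C ** A ** projP C) (b0vec A C b) k"
    and v_nz: "v \<noteq> 0"
  shows
    "let M = projP C ** A ** projP C; b0 = b0vec A C b; g = gam C b;
         vk = n0vec C b + (\<Sum>j=1..k. x j *\<^sub>R lq M b0 j);
         H = transpose S1 ** A ** S1;
         thmin = Min (eigvals H); thmax = Max (eigvals H);
         kappa = (thmax - lams) / (thmin - lams);
         nH = onorm ((*v) (H - lams *\<^sub>R mat 1))
     in 0 \<le> hq A vk - hq A vs
        \<and> hq A vk - hq A vs \<le> 4 * nH * (norm (v - vs))\<^sup>2
        \<and> norm (vk - vs) \<le> 2 * sqrt kappa * norm (v - vs)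
        \<and> \<bar>mu - lams\<bar> \<le> (1 / g\<^sup>2) * (4 * nH * (norm (v - vs))\<^sup>2 + 2 * sqrt kappa * norm b0 * norm (v - vs))"
proof -
  define g where "g = gam C b"
  have n0': "norm n0 < 1" using n0 n0eq by simp
  have g2: "g^2 = 1 - (norm n0)^2" and gpos: "g > 0" using gam_facts[OF n0'] unfolding g_def by auto
  have b0nz: "b0 \<noteq> 0" using b0 b0eq by simp
  have symM: "transpose M = M" by (rule M_sym)
  have symd: "x \<bullet> (M *v y) = y \<bullet> (M *v x)" for x y using sym_dot[OF symM, of x y] by (simp add: inner_commute)
  \<comment> \<open>Lanczos\<close>
  define K where "K = kmax M b0"
  have kK: "k \<le> K" using k(2) unfolding K_def Meq b0eq .
  have nzB: "LB M b0 j \<noteq> 0" if "1 \<le> j" "j < K" for j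
  proof -
    have "\<not> (1 \<le> j \<and> lbeta M b0 (j + 1) = 0)"
      using that(2) unfolding K_def kmax_def by (rule not_less_Least)
    thus ?thesis using that(1) lbeta_LB[of "j+1" M b0] by simp
  qed
  have oJ: "orthJ M b0 k" by (rule lanczos_orth[OF symM b0nz nzB kK]) auto
  have orth: "lq M b0 i \<bullet> lq M b0 j = (if i = j then 1 else 0)" if "i \<in> {1..k}" "j \<in> {1..k}" for i j
    using oJ that unfolding orthJ_def by (auto simp: lq_LQ)
  have q1: "b0 = norm b0 *\<^sub>R lq M b0 1" using b0nz by (simp add: lq_LQ LQ_1)
  have qV: "lq M b0 j \<in> V" if "1 \<le> j" for j
    using LQ_inV[OF subV b0_V M_V] that by (simp add: lq_LQ)
  define U where "U = span (lq M b0 ` {1..k})"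
  have subU: "subspace U" unfolding U_def by (rule subspace_span)
  have UV: "U \<subseteq> V" unfolding U_def by (rule span_minimal) (use qV subV in auto)
  have q1U: "lq M b0 1 \<in> U" unfolding U_def using k(1) by (intro span_base) auto
  have q1nz: "lq M b0 1 \<noteq> 0" using orth[of 1 1] k(1) by auto
  have krylovU: "krylov M b0 k \<subseteq> U"
  proof -
    have "LQ M b0 ` {1..k} = lq M b0 ` {1..k}" by (rule image_cong) (auto simp: lq_LQ)
    thus ?thesis using krylov_sub[of M b0 k] unfolding U_def by simp
  qed
  \<comment> \<open>full problem\<close>
  have lgk: "kktp M b0 V g lams us" using lg_min unfolding lg_minimizer_def lg_iff g_def by blast
  have lgmin: "\<forall>l' u'. kktp M b0 V g l' u' \<longrightarrow> lams \<le> l'"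
    using lg_min unfolding lg_minimizer_def lg_iff g_def by blast
  have psdV: "psdp M V lams" by (rule kkt_min_psd[OF symM subV b0_V b0nz gpos lgk lgmin])
  have usV: "us \<in> V" and nus: "norm us = g" using lgk unfolding kktp_def by auto
  have vs_eq: "vs = n0 + us"
  proof -
    have "crq_minimizer A C b (n0 + us)"
      unfolding crq_minimizer_def
    proof (intro conjI allI impI)
      show "crq_feasible C b (n0 + us)" unfolding crq_iff[OF n0'] using usV nus g_def by simp
      fix w assume "crq_feasible C b w"
      hence wV: "w - n0 \<in> V" and nw: "norm (w - n0) = g" unfolding crq_iff[OF n0'] g_def by auto
      have "fq M b0 us \<le> fq M b0 (w - n0)" by (rule kkt_psd_opt[OF symM lgk psdV subV wV nw])
      hence "hq A (n0 + us) \<le> hq A (n0 + (w - n0))" using h_split[OF usV] h_split[OF wV] by simp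
      thus "hq A (n0 + us) \<le> hq A w" by simp
    qed
    thus ?thesis using vs_unique by blast
  qed
  \<comment> \<open>reduced problem\<close>
  have rf: "rlg_feasible M b0 g k mu x" and rmin: "\<forall>l' x'. rlg_feasible M b0 g k l' x' \<longrightarrow> mu \<le> l'"
    using rlg unfolding rlg_minimizer_def Meq b0eq g_def by auto
  define ux where "ux = (\<Sum>j=1..k. x j *\<^sub>R lq M b0 j)"
  have ukkt: "kktp M b0 U g mu ux" unfolding U_def ux_def
    apply (rule rlg_to_kkt[of k M b0])
       apply (rule orth; assumption)
      apply (rule q1)
     apply (rule k(1))
    apply (rule rf)
    done
  have umin: "\<forall>l' u'. kktp M b0 U g l' u' \<longrightarrow> mu \<le> l'"
  proof (intro allI impI)
    fix l' u' assume kk: "kktp M b0 U g l' u'"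
    have "rlg_feasible M b0 g k l' (\<lambda>j. lq M b0 j \<bullet> u')" unfolding U_def
      apply (rule kkt_to_rlg[of k M b0])
         apply (rule orth; assumption)
        apply (rule q1)
       apply (rule k(1))
      apply (rule kk[unfolded U_def])
      done
    thus "mu \<le> l'" using rmin by blast
  qed
  have psdU: "psdp M U mu" by (rule kkt_min_psd[OF symM subU q1U q1nz gpos ukkt umin])
  have uopt: "fq M b0 ux \<le> fq M b0 w" if "w \<in> U" "norm w = g" for w
    by (rule kkt_psd_opt[OF symM ukkt psdU subU that])
  have uxV: "ux \<in> V" and nux: "norm ux = g" using ukkt UV unfolding kktp_def by auto
  define Qs where "Qs d = d \<bullet> (M *v d) - lams * (d \<bullet> d)" for d
  have Eid: "hq A (n0 + ux) - hq A vs = Qs (ux - us)"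
    using h_split[OF uxV] h_split[OF usV] kkt_identity[OF symM lgk uxV nux] vs_eq unfolding Qs_def by simp
  have Qs_nonneg: "0 \<le> Qs d" if "d \<in> V" for d using psdV that unfolding psdp_def Qs_def by blast
  \<comment> \<open>S1 and H\<close>
  define H where "H = transpose S1 ** A ** S1"
  define nH where "nH = onorm ((*v) (H - lams *\<^sub>R mat 1))"
  have S1V: "S1 *v z \<in> V" for z using S1_span unfolding V_def by blast
  have Vrep: "\<exists>z. d = S1 *v z" if "d \<in> V" for d using S1_span that unfolding V_def by auto
  have S1dot: "(S1 *v z) \<bullet> (S1 *v z) = z \<bullet> z" for z
  proof -
    have "(S1 *v z) \<bullet> (S1 *v z) = z \<bullet> (transpose S1 *v (S1 *v z))" by (simp add: dotT)
    also have "\<dots> = z \<bullet> z" by (simp add: matrix_vector_mul_assoc S1_orth)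
    finally show ?thesis .
  qed
  have S1n: "norm (S1 *v z) = norm z" for z using S1dot[of z] by (simp add: norm_eq_sqrt_inner)
  have S1Q: "Qs (S1 *v z) = z \<bullet> (H *v z) - lams * (z \<bullet> z)" for z
  proof -
    have "(S1 *v z) \<bullet> (M *v (S1 *v z)) = (S1 *v z) \<bullet> (A *v (S1 *v z))" by (rule M_quad[OF S1V])
    also have "\<dots> = z \<bullet> (transpose S1 *v (A *v (S1 *v z)))" by (simp add: dotT)
    also have "\<dots> = z \<bullet> (H *v z)" unfolding H_def by (simp add: matrix_vector_mul_assoc matrix_mul_assoc)
    finally show ?thesis unfolding Qs_def S1dot by simp
  qed
  have symH: "transpose H = H" unfolding H_def by (simp add: matrix_transpose_mul symA matrix_mul_assoc)
  note eig = eig_facts[OF symH]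
  define thmin where "thmin = Min (eigvals H)"
  define thmax where "thmax = Max (eigvals H)"
  have nH0: "0 \<le> nH" unfolding nH_def by (rule onorm_pos_le) simp
  have Qup: "Qs d \<le> nH * (norm d)^2" if dV: "d \<in> V" for d
  proof -
    obtain z where z: "d = S1 *v z" using Vrep[OF dV] by blast
    have "Qs d = z \<bullet> ((H - lams *\<^sub>R mat 1) *v z)" unfolding z S1Q
      by (simp add: matrix_vector_mult_diff_rdistrib scaleR_mat_mv inner_diff_right)
    also have "\<dots> \<le> norm z * norm ((H - lams *\<^sub>R mat 1) *v z)" by (rule norm_cauchy_schwarz)
    also have "\<dots> \<le> norm z * (nH * norm z)" unfolding nH_def
      by (intro mult_left_mono onorm) auto
    also have "\<dots> = nH * (norm d)^2" unfolding z S1n by (simp add: power2_eq_square)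
    finally show ?thesis .
  qed
  have Qlow: "(thmin - lams) * (norm d)^2 \<le> Qs d" if dV: "d \<in> V" for d
  proof -
    obtain z where z: "d = S1 *v z" using Vrep[OF dV] by blast
    have "thmin * (z \<bullet> z) \<le> z \<bullet> (H *v z)" unfolding thmin_def by (rule eig(3))
    thus ?thesis unfolding z S1Q S1n by (simp add: power2_norm_eq_inner algebra_simps)
  qed
  have Qhigh: "Qs d \<le> (thmax - lams) * (norm d)^2" if dV: "d \<in> V" for d
  proof -
    obtain z where z: "d = S1 *v z" using Vrep[OF dV] by blast
    have "z \<bullet> (H *v z) \<le> thmax * (z \<bullet> z)" unfolding thmax_def by (rule eig(4))
    thus ?thesis unfolding z S1Q S1n by (simp add: power2_norm_eq_inner algebra_simps)
  qed
  \<comment> \<open>easy case gives lams < thmin\<close>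
  have thmin_E: "thmin \<in> eigvals H" unfolding thmin_def using eig(1,2) by (rule Min_in)
  then obtain y where y: "y \<noteq> 0" "H *v y = thmin *\<^sub>R y" unfolding eigvals_def by blast
  have yy: "y \<bullet> y > 0" using y(1) by simp
  have Qy: "Qs (S1 *v y) = (thmin - lams) * (y \<bullet> y)" unfolding S1Q y(2) by (simp add: algebra_simps)
  have le: "lams \<le> thmin"
  proof -
    have "0 \<le> (thmin - lams) * (y \<bullet> y)" using Qs_nonneg[OF S1V] Qy by metis
    thus ?thesis using yy by (simp add: zero_le_mult_iff)
  qed
  have lt: "lams < thmin"
  proof (rule ccontr)
    assume "\<not> lams < thmin"
    hence eq: "lams = thmin" using le by simp
    define z where "z = S1 *v y"
    have zV: "z \<in> V" unfolding z_def by (rule S1V)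
    have znz: "z \<noteq> 0" using S1n[of y] y(1) unfolding z_def by auto
    have Nz: "M *v z - lams *\<^sub>R z = 0"
      by (rule psd_zero[OF psdV zV]) (use Qy eq in \<open>simp add: z_def Qs_def\<close>)
    have b0z: "b0 \<bullet> z = 0"
    proof -
      have "z \<bullet> (M *v us - lams *\<^sub>R us + b0) = 0" using lgk zV unfolding kktp_def by blast
      moreover have "z \<bullet> (M *v us) = us \<bullet> (M *v z)" by (rule symd)
      moreover have "M *v z = lams *\<^sub>R z" using Nz by simp
      ultimately show ?thesis by (simp add: inner_add_right inner_diff_right inner_commute)
    qed
    have Nmv: "(M - l *\<^sub>R mat 1) *v w = M *v w - l *\<^sub>R w" for l w
      by (simp add: matrix_vector_mult_diff_rdistrib scaleR_mat_mv)
    have feas: "qep_feasible A C b lams z"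
      unfolding qep_feasible_def Let_def Meq b0eq
      using znz zV Nz b0z unfolding V_def
      by (simp add: matrix_vector_mul_assoc[symmetric] Nmv)
    have qmin: "lams \<le> l'" if qf: "qep_feasible A C b l' z'" for l' z'
    proof -
      have z'nz: "z' \<noteq> 0" and z'V: "z' \<in> V"
        and eqn: "M *v (M *v z' - l' *\<^sub>R z') - l' *\<^sub>R (M *v z' - l' *\<^sub>R z')
                 = (1 / g^2) *\<^sub>R ((b0 \<bullet> z') *\<^sub>R b0)"
        using qf unfolding qep_feasible_def Let_def Meq b0eq V_def g_def
        by (auto simp: matrix_vector_mul_assoc[symmetric] Nmv)
      define Nz' where "Nz' = M *v z' - l' *\<^sub>R z'"
      have Nz'V: "Nz' \<in> V" unfolding Nz'_def using M_V z'V subV by (auto intro: subspace_diff subspace_scale)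
      have NN: "Nz' \<bullet> Nz' = z' \<bullet> (M *v Nz' - l' *\<^sub>R Nz')"
      proof -
        have "Nz' \<bullet> Nz' = (M *v z') \<bullet> Nz' - l' * (z' \<bullet> Nz')"
          by (subst (1) Nz'_def) (simp add: inner_diff_left)
        also have "(M *v z') \<bullet> Nz' = z' \<bullet> (M *v Nz')" using symd[of Nz' z'] by (simp add: inner_commute)
        finally show ?thesis by (simp add: inner_diff_right)
      qed
      show ?thesis
      proof (cases "b0 \<bullet> z' = 0")
        case True
        have "Nz' \<bullet> Nz' = 0" using NN eqn True unfolding Nz'_def by simp
        hence "M *v z' = l' *\<^sub>R z'" unfolding Nz'_def by simp
        hence "Qs z' = (l' - lams) * (z' \<bullet> z')" unfolding Qs_def by (simp add: algebra_simps)
        moreover have "0 \<le> Qs z'" by (rule Qs_nonneg[OF z'V])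
        moreover have "z' \<bullet> z' > 0" using z'nz by simp
        ultimately show ?thesis by (simp add: zero_le_mult_iff)
      next
        case False
        define c where "c = g^2 / (b0 \<bullet> z')"
        define u' where "u' = - c *\<^sub>R Nz'"
        have u'V: "u' \<in> V" unfolding u'_def using Nz'V subV by (auto intro: subspace_scale subspace_neg)
        have g2nz: "g^2 \<noteq> 0" using gpos by simp
        have r: "M *v u' - l' *\<^sub>R u' + b0 = 0"
        proof -
          have "M *v u' - l' *\<^sub>R u' = - c *\<^sub>R (M *v Nz' - l' *\<^sub>R Nz')"
            unfolding u'_def by (simp add: matrix_vector_mult_scaleR mv_neg algebra_simps)
          also have "M *v Nz' - l' *\<^sub>R Nz' = (1 / g^2) *\<^sub>R ((b0 \<bullet> z') *\<^sub>R b0)" using eqn unfolding Nz'_def .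
          finally show ?thesis unfolding c_def using False g2nz by simp
        qed
        have "u' \<bullet> u' = c^2 * (Nz' \<bullet> Nz')" unfolding u'_def by (simp add: power2_eq_square)
        also have "Nz' \<bullet> Nz' = (1 / g^2) * (b0 \<bullet> z')^2"
          using NN eqn unfolding Nz'_def by (simp add: power2_eq_square inner_commute)
        finally have "u' \<bullet> u' = g^2" unfolding c_def using False g2nz
          by (simp add: field_simps power2_eq_square)
        hence "norm u' = g" using gpos by (simp add: norm_eq_sqrt_inner)
        hence "kktp M b0 V g l' u'" unfolding kktp_def using u'V r by simp
        thus ?thesis using lgmin by blast
      qed
    qed
    have "qep_minimizer A C b lams z" unfolding qep_minimizer_def using feas qmin by blast
    hence "qep_hard_case A C b" unfolding qep_hard_case_def using b0z b0eq by auto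
    thus False using easy unfolding qep_easy_case_def by simp
  qed
  \<comment> \<open>comparison vector\<close>
  obtain y0 where y0: "y0 \<in> krylov M b0 k" "v = n0 + y0" using v_kry unfolding Meq b0eq n0eq by blast
  have y0U: "y0 \<in> U" using krylovU y0(1) by blast
  have nq1: "norm (lq M b0 1) = 1" using orth[of 1 1] k(1) by (simp add: norm_eq_sqrt_inner)
  define w where "w = (if y0 = 0 then g *\<^sub>R lq M b0 1 else (g / norm y0) *\<^sub>R y0)"
  have wU: "w \<in> U" unfolding w_def using subU q1U y0U by (auto intro: subspace_scale)
  have nw: "norm w = g" unfolding w_def using nq1 gpos by auto
  have wV: "w \<in> V" using wU UV by blast
  have vvs: "v - vs = y0 - us" using y0(2) vs_eq by simp
  have wclose: "norm (w - us) \<le> 2 * norm (v - vs)"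
  proof (cases "y0 = 0")
    case True
    have "norm (w - us) \<le> norm w + norm us" by (rule norm_triangle_ineq4)
    thus ?thesis using True nw nus vvs by simp
  next
    case False
    have "w - y0 = (g / norm y0 - 1) *\<^sub>R y0" unfolding w_def using False by (simp add: algebra_simps)
    hence "norm (w - y0) = \<bar>(g / norm y0 - 1) * norm y0\<bar>" by (simp add: abs_mult)
    moreover have "(g / norm y0 - 1) * norm y0 = g - norm y0" using False by (simp add: divide_simps)
    ultimately have "norm (w - y0) = \<bar>norm us - norm y0\<bar>" using nus by simp
    also have "\<dots> \<le> norm (us - y0)" by (rule norm_triangle_ineq3)
    also have "\<dots> = norm (y0 - us)" by (rule norm_minus_commute)
    finally have a: "norm (w - y0) \<le> norm (y0 - us)" .
    have "norm (w - us) \<le> norm (w - y0) + norm (y0 - us)" using norm_triangle_ineq[of "w - y0" "y0 - us"] by simp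
    thus ?thesis using a vvs by simp
  qed
  define E where "E = hq A (n0 + ux) - hq A vs"
  have Efq: "E = fq M b0 ux - fq M b0 us" using h_split[OF uxV] h_split[OF usV] vs_eq unfolding E_def by simp
  have EQ: "E = Qs (ux - us)" using Eid unfolding E_def .
  have dV: "ux - us \<in> V" by (rule subspace_diff[OF subV uxV usV])
  have wusV: "w - us \<in> V" by (rule subspace_diff[OF subV wV usV])
  have Ew: "E \<le> Qs (w - us)"
  proof -
    have "fq M b0 ux \<le> fq M b0 w" by (rule uopt[OF wU nw])
    moreover have "fq M b0 w - fq M b0 us = Qs (w - us)" using kkt_identity[OF symM lgk wV nw] unfolding Qs_def .
    ultimately show ?thesis using Efq by simp
  qed
  define N where "N = norm (v - vs)"
  have N0: "0 \<le> N" unfolding N_def by simp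
  have wsq: "(norm (w - us))^2 \<le> 4 * N^2"
  proof -
    have "(norm (w - us))^2 \<le> (2 * N)^2" using wclose unfolding N_def by (intro power_mono) auto
    thus ?thesis by (simp add: power_mult_distrib)
  qed
  have c1: "0 \<le> E" using EQ Qs_nonneg[OF dV] by simp
  have c2: "E \<le> 4 * nH * N^2"
  proof -
    have "E \<le> nH * (norm (w - us))^2" using Ew Qup[OF wusV] by linarith
    also have "\<dots> \<le> nH * (4 * N^2)" using wsq nH0 by (rule mult_left_mono)
    finally show ?thesis by simp
  qed
  define kappa where "kappa = (thmax - lams) / (thmin - lams)"
  have thle: "thmin \<le> thmax" unfolding thmin_def thmax_def using eig(1,2) by (meson Max_in Min_le)
  have kpos: "0 \<le> kappa" unfolding kappa_def using lt thle by simp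
  have c3sq: "(norm (ux - us))^2 \<le> 4 * kappa * N^2"
  proof -
    have "(thmin - lams) * (norm (ux - us))^2 \<le> E" using Qlow[OF dV] EQ by simp
    also have "\<dots> \<le> (thmax - lams) * (norm (w - us))^2" using Ew Qhigh[OF wusV] by linarith
    also have "\<dots> \<le> (thmax - lams) * (4 * N^2)" using wsq thle lt by (intro mult_left_mono) auto
    finally have "(thmin - lams) * (norm (ux - us))^2 \<le> (thmax - lams) * (4 * N^2)" .
    hence "(norm (ux - us))^2 \<le> (thmax - lams) * (4 * N^2) / (thmin - lams)"
      using lt by (simp add: pos_le_divide_eq mult.commute)
    thus ?thesis unfolding kappa_def by (simp add: field_simps)
  qed
  have c3: "norm (ux - us) \<le> 2 * sqrt kappa * N"
  proof -
    have "norm (ux - us) = sqrt ((norm (ux - us))^2)" by simp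
    also have "\<dots> \<le> sqrt (4 * kappa * N^2)" using c3sq by (rule real_sqrt_le_mono)
    also have "\<dots> = 2 * sqrt kappa * N" using N0 kpos by (simp add: real_sqrt_mult)
    finally show ?thesis .
  qed
  have mu_eq: "mu * g^2 = fq M b0 ux - b0 \<bullet> ux"
  proof -
    have "ux \<in> U" using ukkt unfolding kktp_def by blast
    hence "ux \<bullet> (M *v ux - mu *\<^sub>R ux + b0) = 0" using ukkt unfolding kktp_def by blast
    moreover have "ux \<bullet> ux = g^2" using nux by (simp add: power2_norm_eq_inner[symmetric])
    ultimately show ?thesis unfolding fq_def by (simp add: inner_add_right inner_diff_right inner_commute)
  qed
  have lams_eq: "lams * g^2 = fq M b0 us - b0 \<bullet> us"
  proof -
    have "us \<bullet> (M *v us - lams *\<^sub>R us + b0) = 0" using lgk usV unfolding kktp_def by blast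
    moreover have "us \<bullet> us = g^2" using nus by (simp add: power2_norm_eq_inner[symmetric])
    ultimately show ?thesis unfolding fq_def by (simp add: inner_add_right inner_diff_right inner_commute)
  qed
  have c4: "\<bar>mu - lams\<bar> \<le> (1 / g^2) * (4 * nH * N^2 + 2 * sqrt kappa * norm b0 * N)"
  proof -
    have "(mu - lams) * g^2 = E - b0 \<bullet> (ux - us)" using mu_eq lams_eq Efq
      by (simp add: algebra_simps inner_diff_right)
    hence "\<bar>mu - lams\<bar> * g^2 = \<bar>E - b0 \<bullet> (ux - us)\<bar>" by (metis abs_mult abs_power2)
    also have "\<dots> \<le> \<bar>E\<bar> + \<bar>b0 \<bullet> (ux - us)\<bar>" by (rule abs_triangle_ineq4)
    also have "\<bar>b0 \<bullet> (ux - us)\<bar> \<le> norm b0 * norm (ux - us)" by (rule Cauchy_Schwarz_ineq2)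
    also have "norm b0 * norm (ux - us) \<le> norm b0 * (2 * sqrt kappa * N)" using c3 by (simp add: mult_left_mono)
    finally have "\<bar>mu - lams\<bar> * g^2 \<le> 4 * nH * N^2 + 2 * sqrt kappa * norm b0 * N"
      using c1 c2 by (simp add: algebra_simps)
    thus ?thesis using gpos by (simp add: field_simps)
  qed
  have vk_eq: "n0 + ux - vs = ux - us" using vs_eq by simp
  show ?thesis
    unfolding Let_def Meq b0eq n0eq g_def[symmetric] H_def[symmetric] thmin_def[symmetric]
      thmax_def[symmetric] kappa_def[symmetric] nH_def[symmetric] ux_def[symmetric] E_def[symmetric]
      N_def[symmetric] vk_eq
    using c1 c2 c3 c4 by simp
qed


end

theorem lemma4p1:
  fixes A :: "real^'n^'n" and C :: "real^'m^'n" and b :: "real^'m"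
    and S1 :: "real^'k^'n"
    and vs :: "real^'n" and lams :: real and us :: "real^'n"
    and k :: nat and mu :: real and x :: "nat \<Rightarrow> real" and v :: "real^'n"
  assumes symA: "transpose A = A"
    and mn: "CARD('m) < CARD('n)"
    and rankC: "rank C = CARD('m)"
    and n0: "norm (n0vec C b) < 1"
    and b0: "b0vec A C b \<noteq> 0"
    and S1_orth: "transpose S1 ** S1 = mat 1"
    and S1_span: "range ((*v) S1) = {y. transpose C *v y = 0}"
    and easy: "qep_easy_case A C b"
    and vs_min: "crq_minimizer A C b vs"
    and vs_unique: "\<forall>w. crq_minimizer A C b w \<longrightarrow> w = vs"
    and lg_min: "lg_minimizer A C b lams us"
    and k: "1 \<le> k" "k \<le> kmax (projP C ** A ** projP C) (b0vec A C b)"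
    and rlg: "rlg_minimizer (projP C ** A ** projP C) (b0vec A C b) (gam C b) k mu x"
    and v_kry: "v \<in> (\<lambda>y. n0vec C b + y) ` krylov (projP C ** A ** projP C) (b0vec A C b) k"
    and v_nz: "v \<noteq> 0"
  shows
    "let M = projP C ** A ** projP C; b0 = b0vec A C b; g = gam C b;
         vk = n0vec C b + (\<Sum>j=1..k. x j *\<^sub>R lq M b0 j);
         H = transpose S1 ** A ** S1;
         thmin = Min (eigvals H); thmax = Max (eigvals H);
         kappa = (thmax - lams) / (thmin - lams);
         nH = onorm ((*v) (H - lams *\<^sub>R mat 1))
     in 0 \<le> hq A vk - hq A vs
        \<and> hq A vk - hq A vs \<le> 4 * nH * (norm (v - vs))\<^sup>2
        \<and> norm (vk - vs) \<le> 2 * sqrt kappa * norm (v - vs)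
        \<and> \<bar>mu - lams\<bar> \<le> (1 / g\<^sup>2) * (4 * nH * (norm (v - vs))\<^sup>2 + 2 * sqrt kappa * norm b0 * norm (v - vs))"
proof -
  interpret setting A C b using symA rankC by unfold_locales
  show ?thesis by (rule main[OF n0 b0 S1_orth S1_span easy vs_min vs_unique lg_min k rlg v_kry v_nz])
qed

end
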